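(* Let $\lambda=\sum_{i=1}^r m_i\omega_i\in P^+$. Then $V(\lambda)=\sum_{k_1,\dots,k_r\in\mathbb N,\ k_1\le m_1}\mathbf U(\mathfrak n^-_{r-1/2})(x^-_{1,r})^{k_1}\cdots(x^-_{r,r})^{k_r}v_\lambda$.
   Context: $\mathfrak g=\mathfrak{sp}_{2r}$: complex matrices $(a_{i,j})$, indices $1,\dots,r,-r,\dots,-1$, $a_{i,j}=-\mathrm{sgn}(i)\mathrm{sgn}(j)a_{-j,-i}$; $\mathfrak h$ spanned by $E_{i,i}-E_{-i,-i}$, dual basis $\varepsilon_i$; $\omega_i=\varepsilon_1+\dots+\varepsilon_i$, $P^+=\sum\mathbb N\omega_i$. Root vectors: $x^-_{i,j-1}=E_{j,i}-E_{-i,-j}$, $x^-_{i,\overline j}=E_{-j,i}+E_{-i,j}$ ($1\le i<j\le r$), $x^-_{i,\overline i}=E_{-i,i}$, and $x^-_{i,r}:=x^-_{i,\overline r}=E_{-r,i}+E_{-i,r}$ ($i<r$), $x^-_{r,r}=E_{-r,r}$. $\mathfrak n^-_{r-1/2}$ is the span of $x^-_{i,j}$ and $x^-_{i,\overline j}$ for $1\le i\le j<r$. $V(\lambda)$ is the irreducible finite-dimensional $\mathfrak g$-module of highest weight $\lambda$ (with respect to the Borel subalgebra spanned by $\mathfrak h$ and the matrices $x^+_{i,j-1}=E_{i,j}-E_{-j,-i}$, $x^+_{i,\overline j}=E_{i,-j}+E_{j,-i}$, $x^+_{i,\overline i}=E_{i,-i}$), with highest weight vector $v_\lambda$. *)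

theory Defs
  imports "HOL-Analysis.Analysis"
begin

text \<open>Matrices of sp_{2r} are indexed by 1..r, -r..-1, realised as integers i with 1 <= |i| <= r.
  A matrix is a function int => int => complex vanishing outside this index set.\<close>

type_synonym mat = "int \<Rightarrow> int \<Rightarrow> complex"

definition idx :: "nat \<Rightarrow> int set" where
  "idx r = {i. 1 \<le> \<bar>i\<bar> \<and> \<bar>i\<bar> \<le> int r}"

definition Emat :: "int \<Rightarrow> int \<Rightarrow> mat" where
  "Emat a b = (\<lambda>i j. if i = a \<and> j = b then 1 else 0)"

definition madd :: "mat \<Rightarrow> mat \<Rightarrow> mat" where
  "madd A B = (\<lambda>i j. A i j + B i j)"

definition msub :: "mat \<Rightarrow> mat \<Rightarrow> mat" where
  "msub A B = (\<lambda>i j. A i j - B i j)"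

definition sp :: "nat \<Rightarrow> mat set" where
  "sp r = {A. (\<forall>i j. (i \<notin> idx r \<or> j \<notin> idx r) \<longrightarrow> A i j = 0) \<and>
              (\<forall>i\<in>idx r. \<forall>j\<in>idx r. A i j = - of_int (sgn i * sgn j) * A (-j) (-i))}"

definition bracket :: "nat \<Rightarrow> mat \<Rightarrow> mat \<Rightarrow> mat" where
  "bracket r A B = (\<lambda>i j. \<Sum>k\<in>idx r. A i k * B k j - B i k * A k j)"

text \<open>Negative root vectors.  xm i j is x^-_{i,j} = E_{j+1,i} - E_{-i,-(j+1)};
  xmbar i j is x^-_{i,bar j} (= E_{-j,i} + E_{-i,j} for i<j, E_{-i,i} for i=j).\<close>
definition xm :: "int \<Rightarrow> int \<Rightarrow> mat" where
  "xm i j = msub (Emat (j + 1) i) (Emat (-i) (-(j + 1)))"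

definition xmbar :: "int \<Rightarrow> int \<Rightarrow> mat" where
  "xmbar i j = (if i = j then Emat (-i) i else madd (Emat (-j) i) (Emat (-i) j))"

text \<open>x^-_{i,r} := x^-_{i,bar r}.\<close>
definition xr :: "nat \<Rightarrow> nat \<Rightarrow> mat" where
  "xr r i = xmbar (int i) (int r)"

text \<open>Positive root vectors: x^+_{i,j-1} = E_{i,j} - E_{-j,-i} (i<j),
  x^+_{i,bar j} = E_{i,-j} + E_{j,-i} (i<j), x^+_{i,bar i} = E_{i,-i}.\<close>
definition nplus :: "nat \<Rightarrow> mat set" where
  "nplus r = {msub (Emat i j) (Emat (-j) (-i)) | i j. 1 \<le> i \<and> i < j \<and> j \<le> int r}
           \<union> {madd (Emat i (-j)) (Emat j (-i)) | i j. 1 \<le> i \<and> i < j \<and> j \<le> int r}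
           \<union> {Emat i (-i) | i. 1 \<le> i \<and> i \<le> int r}"

definition nminus_half :: "nat \<Rightarrow> mat set" where
  "nminus_half r = {xm i j | i j. 1 \<le> i \<and> i \<le> j \<and> j < int r}
                 \<union> {xmbar i j | i j. 1 \<le> i \<and> i \<le> j \<and> j < int r}"

definition is_rep :: "nat \<Rightarrow> (mat \<Rightarrow> complex^'n^'n) \<Rightarrow> bool" where
  "is_rep r \<rho> \<longleftrightarrow>
     (\<forall>A\<in>sp r. \<forall>B\<in>sp r. \<forall>a b w.
        \<rho> (\<lambda>i j. a * A i j + b * B i j) *v w = a *s (\<rho> A *v w) + b *s (\<rho> B *v w)) \<and>
     (\<forall>A\<in>sp r. \<forall>B\<in>sp r. \<forall>w.
        \<rho> (bracket r A B) *v w = \<rho> A *v (\<rho> B *v w) - \<rho> B *v (\<rho> A *v w))"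

definition invariant_subspace :: "nat \<Rightarrow> (mat \<Rightarrow> complex^'n^'n) \<Rightarrow> (complex^'n) set \<Rightarrow> bool" where
  "invariant_subspace r \<rho> W \<longleftrightarrow> vec.subspace W \<and> (\<forall>A\<in>sp r. \<forall>w\<in>W. \<rho> A *v w \<in> W)"

definition irreducible_rep :: "nat \<Rightarrow> (mat \<Rightarrow> complex^'n^'n) \<Rightarrow> bool" where
  "irreducible_rep r \<rho> \<longleftrightarrow> (\<forall>W. invariant_subspace r \<rho> W \<longrightarrow> W = {0} \<or> W = UNIV)"

text \<open>v is a highest weight vector of weight lambda = sum_i m_i omega_i:
  (E_{jj}-E_{-j,-j}) acts by omega-coefficient sum_{i>=j} m_i, and n^+ kills v.\<close>
definition is_hwv :: "nat \<Rightarrow> (nat \<Rightarrow> nat) \<Rightarrow> (mat \<Rightarrow> complex^'n^'n) \<Rightarrow> complex^'n \<Rightarrow> bool" where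
  "is_hwv r m \<rho> v \<longleftrightarrow> v \<noteq> 0 \<and>
     (\<forall>j\<in>{1..r}. \<rho> (msub (Emat (int j) (int j)) (Emat (- int j) (- int j))) *v v
                   = of_nat (\<Sum>i\<in>{j..r}. m i) *s v) \<and>
     (\<forall>X\<in>nplus r. \<rho> X *v v = 0)"

definition xmono :: "nat \<Rightarrow> (mat \<Rightarrow> complex^'n^'n) \<Rightarrow> (nat \<Rightarrow> nat) \<Rightarrow> complex^'n \<Rightarrow> complex^'n" where
  "xmono r \<rho> k v = foldr (\<lambda>i w. (((*v) (\<rho> (xr r i))) ^^ k i) w) [1..<r+1] v"

text \<open>Action of a PBW-type monomial y_1 ... y_p of U(n) on w.\<close>
definition act_list :: "(mat \<Rightarrow> complex^'n^'n) \<Rightarrow> mat list \<Rightarrow> complex^'n \<Rightarrow> complex^'n" where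
  "act_list \<rho> ys w = foldr (\<lambda>y u. \<rho> y *v u) ys w"

end

theory Submission
  imports Defs
begin

lemma span_map:
  fixes A :: "complex^'n^'n"
  assumes "\<And>s. s \<in> S \<Longrightarrow> A *v s \<in> vec.span T" and "w \<in> vec.span S"
  shows "A *v w \<in> vec.span T"
  using assms(2)
proof (induction rule: vec.span_induct_alt)
  case base then show ?case by (simp add: vec.span_zero)
next
  case (step c x y)
  have "A *v (c *s x + y) = c *s (A *v x) + A *v y"
    by (simp add: matrix_vector_right_distrib matrix_vector_mult_scaleR vec.linear_add vec.linear_scale)
  then show ?case using step assms(1) by (simp add: vec.span_add vec.span_scale)
qed

lemma eig_indep:
  fixes H :: "complex^'n^'n"
  assumes "\<And>s. s \<in> S \<Longrightarrow> H *v s = l s *s s" "\<And>s. s \<in> S \<Longrightarrow> s \<noteq> 0" "inj_on l S"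
  shows "finite t \<Longrightarrow> t \<subseteq> S \<Longrightarrow> (\<Sum>s\<in>t. u s *s s) = 0 \<Longrightarrow> s \<in> t \<Longrightarrow> u s = 0"
proof (induction t arbitrary: u s rule: finite_induct)
  case empty then show ?case by simp
next
  case (insert a t)
  have lin: "H *v (\<Sum>s\<in>insert a t. u s *s s) = (\<Sum>s\<in>insert a t. (u s * l s) *s s)"
    unfolding vec.linear_sum[OF matrix_vector_mul_linear_gen] vec.linear_scale[OF matrix_vector_mul_linear_gen]
    using insert.prems(1) assms(1) by (intro sum.cong refl) (auto simp: vec.scale_scale mult.commute)
  have "(\<Sum>s\<in>insert a t. (u s * l s) *s s) - l a *s (\<Sum>s\<in>insert a t. u s *s s) = (\<Sum>s\<in>t. (u s * (l s - l a)) *s s)"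
    using insert.hyps by (simp add: vec.scale_sum_right algebra_simps sum_subtractf[symmetric] vec.scale_left_diff_distrib)
  then have z: "(\<Sum>s\<in>t. (u s * (l s - l a)) *s s) = 0"
    using lin insert.prems(2) by simp
  have ut: "u s = 0" if "s \<in> t" for s
  proof -
    have "u s * (l s - l a) = 0" using insert.IH[OF _ z that] insert.prems(1) by auto
    moreover have "l s \<noteq> l a" using assms(3) insert.prems(1) insert.hyps(2) that
      by (metis inj_onD insert_subset subsetD)
    ultimately show ?thesis by simp
  qed
  then have "(\<Sum>s\<in>t. u s *s s) = 0" by simp
  then have "u a *s a = 0" using insert.prems(2) insert.hyps by simp
  then have "u a = 0" using assms(2) insert.prems(1) by auto
  then show ?case using ut insert.prems(3) by auto
qed

lemma mv_scale: "(A::complex^'n^'n) *v (c *s x) = c *s (A *v x)"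
  by (rule vec.linear_scale[OF matrix_vector_mul_linear_gen])

lemma mv_add: "(A::complex^'n^'n) *v (x + y) = A *v x + A *v y"
  by (rule vec.linear_add[OF matrix_vector_mul_linear_gen])

lemma mv_diff: "(A::complex^'n^'n) *v (x - y) = A *v x - A *v y"
  by (rule vec.linear_diff[OF matrix_vector_mul_linear_gen])

lemma mv_zero: "(A::complex^'n^'n) *v 0 = 0"
  by (rule vec.linear_0[OF matrix_vector_mul_linear_gen])

lemma nonzero_eigs_bounded:
  fixes H :: "complex^'n^'n" and U :: "nat \<Rightarrow> complex^'n"
  assumes "\<And>k. H *v U k = \<mu> k *s U k" "inj \<mu>"
  shows "\<exists>k. U k = 0"
proof (rule ccontr)
  assume "\<not> (\<exists>k. U k = 0)"
  then have nz: "\<And>k. U k \<noteq> 0" by auto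
  define l where "l s = (SOME c. H *v s = c *s s)" for s
  have lU: "l (U k) = \<mu> k" for k
  proof -
    have "H *v U k = l (U k) *s U k" unfolding l_def by (rule someI, rule assms(1))
    then have "(l (U k) - \<mu> k) *s U k = 0" using assms(1)[of k]
      by (metis diff_self vec.scale_left_diff_distrib)
    then have "l (U k) - \<mu> k = 0" using nz[of k] vec.scale_eq_0_iff by blast
    then show ?thesis by simp
  qed
  define D where "D = CARD('n)"
  define S where "S = U ` {..D}"
  have injU: "inj_on U {..D}"
    by (metis assms(2) injD inj_onI lU)
  have cardS: "card S = Suc D" unfolding S_def using card_image[OF injU] by simp
  have injl: "inj_on l S" unfolding S_def
    by (auto simp: inj_on_def lU dest: injD[OF assms(2)])
  have "vec.independent S"
    unfolding vec.independent_explicit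
  proof (intro conjI allI impI ballI)
    show "finite S" unfolding S_def by simp
    fix c s assume "(\<Sum>v\<in>S. c v *s v) = 0" "s \<in> S"
    moreover have "\<And>s. s \<in> S \<Longrightarrow> H *v s = l s *s s" unfolding S_def using lU assms(1) by auto
    moreover have "\<And>s. s \<in> S \<Longrightarrow> s \<noteq> 0" unfolding S_def using nz by auto
    ultimately show "c s = 0"
      using eig_indep[of S H l, OF _ _ injl, of S c s] \<open>finite S\<close> by blast
  qed
  then have "card S \<le> vec.dim S" using vec.independent_bound_general by blast
  also have "\<dots> \<le> D" unfolding D_def by (rule dim_subset_UNIV_cart_gen)
  finally show False using cardS by simp
qed

lemma sl2_nil:
  fixes E F H :: "complex^'n^'n"
  assumes EF: "\<And>w. E *v (F *v w) - F *v (E *v w) = H *v w"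
  and HF: "\<And>w. H *v (F *v w) - F *v (H *v w) = (-2) *s (F *v w)"
  and Eu: "E *v u = 0" and Hu: "H *v u = of_nat n *s u"
  shows "((*v) F ^^ (Suc n)) u = 0"
proof -
  define U where "U k = ((*v) F ^^ k) u" for k
  have US: "U (Suc k) = F *v U k" for k unfolding U_def by simp
  have HU: "H *v U k = (of_nat n - 2 * of_nat k) *s U k" for k
  proof (induction k)
    case 0 then show ?case using Hu by (simp add: U_def)
  next
    case (Suc k)
    have "H *v U (Suc k) = F *v (H *v U k) + (-2) *s (F *v U k)"
      using HF[of "U k"] unfolding US by (simp add: diff_eq_eq)
    also have "\<dots> = ((of_nat n - 2 * of_nat k) + (-2)) *s U (Suc k)"
      unfolding Suc mv_scale US by (rule vec.scale_left_distrib[symmetric])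
    also have "(of_nat n - 2 * of_nat k) + (-2) = (of_nat n - 2 * of_nat (Suc k) :: complex)"
      by simp
    finally show ?case .
  qed
  have EU: "E *v U (Suc k) = (of_nat (Suc k) * (of_nat n - of_nat k)) *s U k" for k
  proof (induction k)
    case 0 then show ?case using EF[of u] Eu Hu by (simp add: U_def mv_zero)
  next
    case (Suc k)
    have "E *v U (Suc (Suc k)) = F *v (E *v U (Suc k)) + H *v U (Suc k)"
      using EF[of "U (Suc k)"] unfolding US[of "Suc k"] by (simp add: diff_eq_eq)
    also have "\<dots> = (of_nat (Suc k) * (of_nat n - of_nat k) + (of_nat n - 2 * of_nat (Suc k))) *s U (Suc k)"
      by (simp only: Suc mv_scale HU US[symmetric]) (rule vec.scale_left_distrib[symmetric])
    also have "(of_nat (Suc k) * (of_nat n - of_nat k) + (of_nat n - 2 * of_nat (Suc k)) :: complex)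
       = of_nat (Suc (Suc k)) * (of_nat n - of_nat (Suc k))"
      by (simp add: algebra_simps)
    finally show ?case .
  qed
  obtain K where K: "U K = 0"
    using nonzero_eigs_bounded[of H U "\<lambda>k. of_nat n - 2 * of_nat k"] HU
    by (auto simp: inj_def)
  show ?thesis
  proof (rule ccontr)
    assume A: "((*v) F ^^ (Suc n)) u \<noteq> 0"
    have "U (Suc n + j) \<noteq> 0" for j
    proof (induction j)
      case 0 then show ?case using A by (simp add: U_def)
    next
      case (Suc j)
      show ?case
      proof
        assume "U (Suc n + Suc j) = 0"
        then have "E *v U (Suc (Suc n + j)) = 0" by (simp add: mv_zero)
        then have "(of_nat (Suc (Suc n + j)) * (of_nat n - of_nat (Suc n + j)) :: complex) *s U (Suc n + j) = 0"
          using EU[of "Suc n + j"] by simp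
        moreover have "(of_nat (Suc (Suc n + j)) * (of_nat n - of_nat (Suc n + j)) :: complex) \<noteq> 0"
        proof -
          have "(of_nat n - of_nat (Suc n + j) :: complex) = - of_nat (Suc j)" by simp
          then show ?thesis by (simp del: of_nat_Suc of_nat_add)
        qed
        ultimately show False using Suc by simp
      qed
    qed
    moreover have "U (K + j) = 0" for j by (induction j) (auto simp: K US mv_zero)
    ultimately show False
      by (metis add.commute le_add_diff_inverse nat_le_linear)
  qed
qed

definition smul :: "complex \<Rightarrow> mat \<Rightarrow> mat" where
  "smul c A = (\<lambda>i j. c * A i j)"

lemma sp_lin: "A \<in> sp r \<Longrightarrow> B \<in> sp r \<Longrightarrow> (\<lambda>i j. a * A i j + b * B i j) \<in> sp r"
  unfolding sp_def by (auto simp: algebra_simps)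

lemma sp_zero: "(\<lambda>i j. 0) \<in> sp r"
  unfolding sp_def by auto

lemma sp_smul: "A \<in> sp r \<Longrightarrow> smul c A \<in> sp r"
  unfolding sp_def smul_def by (auto simp: algebra_simps)

lemma sp_sum: "finite F \<Longrightarrow> (\<And>t. t \<in> F \<Longrightarrow> A t \<in> sp r) \<Longrightarrow> (\<lambda>i j. \<Sum>t\<in>F. c t * A t i j) \<in> sp r"
proof (induction F rule: finite_induct)
  case empty then show ?case by (simp add: sp_zero)
next
  case (insert x F)
  have "(\<lambda>i j. c x * A x i j + 1 * (\<Sum>t\<in>F. c t * A t i j)) \<in> sp r"
    using insert by (intro sp_lin) auto
  then show ?case using insert.hyps by simp
qed

context
  fixes r :: nat and \<rho> :: "mat \<Rightarrow> complex^'n^'n"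
  assumes rep: "is_rep r \<rho>"
begin

lemma rho_lin: "A \<in> sp r \<Longrightarrow> B \<in> sp r \<Longrightarrow>
   \<rho> (\<lambda>i j. a * A i j + b * B i j) *v w = a *s (\<rho> A *v w) + b *s (\<rho> B *v w)"
  using rep unfolding is_rep_def by blast

lemma rho_br: "A \<in> sp r \<Longrightarrow> B \<in> sp r \<Longrightarrow>
   \<rho> (bracket r A B) *v w = \<rho> A *v (\<rho> B *v w) - \<rho> B *v (\<rho> A *v w)"
  using rep unfolding is_rep_def by blast

lemma rho_zero: "\<rho> (\<lambda>i j. 0) *v w = 0"
  using rho_lin[OF sp_zero sp_zero, of 0 0 w] by simp

lemma rho_smul: "A \<in> sp r \<Longrightarrow> \<rho> (smul c A) *v w = c *s (\<rho> A *v w)"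
  using rho_lin[of A A c 0 w] unfolding smul_def by simp

lemma rho_sum: "finite F \<Longrightarrow> (\<And>t. t \<in> F \<Longrightarrow> A t \<in> sp r) \<Longrightarrow>
   \<rho> (\<lambda>i j. \<Sum>t\<in>F. c t * A t i j) *v w = (\<Sum>t\<in>F. c t *s (\<rho> (A t) *v w))"
proof (induction F rule: finite_induct)
  case empty then show ?case by (simp add: rho_zero)
next
  case (insert x F)
  have "\<rho> (\<lambda>i j. c x * A x i j + 1 * (\<Sum>t\<in>F. c t * A t i j)) *v w
     = c x *s (\<rho> (A x) *v w) + 1 *s (\<rho> (\<lambda>i j. \<Sum>t\<in>F. c t * A t i j) *v w)"
    using insert by (intro rho_lin sp_sum) auto
  then show ?case using insert by simp
qed

end

lemma idx_neg[simp]: "(- i \<in> idx r) = (i \<in> idx r)"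
  unfolding idx_def by auto

lemma idx_nz: "i \<in> idx r \<Longrightarrow> i \<noteq> 0"
  unfolding idx_def by auto

lemma sgn_sq: "i \<noteq> (0::int) \<Longrightarrow> (of_int (sgn i) :: complex) * of_int (sgn i) = 1"
  by (cases "i > 0") (auto simp: sgn_if)

lemma sum_idx_neg: "(\<Sum>k\<in>idx r. f k) = (\<Sum>k\<in>idx r. f (- k))"
  by (rule sum.reindex_bij_witness[of _ uminus uminus]) auto

lemma spD: "A \<in> sp r \<Longrightarrow> i \<in> idx r \<Longrightarrow> j \<in> idx r \<Longrightarrow> A i j = - of_int (sgn i * sgn j) * A (-j) (-i)"
  unfolding sp_def by blast

lemma spD0: "A \<in> sp r \<Longrightarrow> i \<notin> idx r \<or> j \<notin> idx r \<Longrightarrow> A i j = 0"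
  unfolding sp_def by blast

lemma alg1: "(z::complex) * z = 1 \<Longrightarrow> (-(x*z)*a)*(-(z*y)*b) - (-(x*z)*c)*(-(z*y)*d) = y*x*(b*a - d*c)"
proof -
  assume z: "z * z = 1"
  have "(-(x*z)*a)*(-(z*y)*b) - (-(x*z)*c)*(-(z*y)*d) = (z*z) * (y*x*(b*a - d*c))"
    by (simp add: algebra_simps)
  then show ?thesis using z by simp
qed

lemma alg2: "(w::complex) * w = 1 \<Longrightarrow> Y = - w * X \<Longrightarrow> X = - w * Y"
proof -
  assume "w * w = 1" "Y = - w * X"
  then have "- w * Y = (w * w) * X" by (simp add: algebra_simps)
  then show ?thesis using \<open>w * w = 1\<close> by simp
qed

lemma bracket_sp:
  assumes A: "A \<in> sp r" and B: "B \<in> sp r"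
  shows "bracket r A B \<in> sp r"
  unfolding sp_def mem_Collect_eq
proof (intro conjI allI impI ballI)
  fix i j assume "i \<notin> idx r \<or> j \<notin> idx r"
  then show "bracket r A B i j = 0" unfolding bracket_def
    using spD0[OF A] spD0[OF B] by (auto intro!: sum.neutral)
next
  fix i j assume i: "i \<in> idx r" and j: "j \<in> idx r"
  let ?s = "\<lambda>x. (of_int (sgn x) :: complex)"
  have tm: "A (-j) (-k) * B (-k) (-i) - B (-j) (-k) * A (-k) (-i)
      = ?s i * ?s j * (B i k * A k j - A i k * B k j)" if k: "k \<in> idx r" for k
  proof -
    have a1: "A (-j) (-k) = - (?s j * ?s k) * A k j" using spD[OF A, of "-j" "-k"] i j k by (simp add: sgn_minus)
    have b1: "B (-k) (-i) = - (?s k * ?s i) * B i k" using spD[OF B, of "-k" "-i"] i j k by (simp add: sgn_minus)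
    have b2: "B (-j) (-k) = - (?s j * ?s k) * B k j" using spD[OF B, of "-j" "-k"] i j k by (simp add: sgn_minus)
    have a2: "A (-k) (-i) = - (?s k * ?s i) * A i k" using spD[OF A, of "-k" "-i"] i j k by (simp add: sgn_minus)
    have kk: "?s k * ?s k = 1" using sgn_sq idx_nz k by blast
    show ?thesis unfolding a1 b1 a2 b2 by (rule alg1[OF kk])
  qed
  have "bracket r A B (-j) (-i) = (\<Sum>k\<in>idx r. A (-j) (-k) * B (-k) (-i) - B (-j) (-k) * A (-k) (-i))"
    unfolding bracket_def by (subst sum_idx_neg) simp
  also have "\<dots> = (\<Sum>k\<in>idx r. ?s i * ?s j * (- (A i k * B k j - B i k * A k j)))"
    by (rule sum.cong[OF refl]) (simp add: tm)
  also have "\<dots> = ?s i * ?s j * (- bracket r A B i j)"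
    unfolding bracket_def sum_distrib_left[symmetric] sum_negf ..
  finally have eq: "bracket r A B (-j) (-i) = - (?s i * ?s j) * bracket r A B i j" by simp
  have ww: "?s i * ?s j * (?s i * ?s j) = 1"
  proof -
    have "?s i * ?s j * (?s i * ?s j) = (?s i * ?s i) * (?s j * ?s j)" by (simp only: mult_ac)
    then show ?thesis using sgn_sq[OF idx_nz[OF i]] sgn_sq[OF idx_nz[OF j]] by simp
  qed
  show "bracket r A B i j = - of_int (sgn i * sgn j) * bracket r A B (- j) (- i)"
    unfolding of_int_mult by (rule alg2[OF ww eq])
qed

lemma bracket_add_l: "bracket r (madd A B) C = madd (bracket r A C) (bracket r B C)"
  unfolding bracket_def madd_def
  by (intro ext) (simp only: sum.distrib[symmetric], rule sum.cong[OF refl], simp add: algebra_simps)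
lemma bracket_sub_l: "bracket r (msub A B) C = msub (bracket r A C) (bracket r B C)"
  unfolding bracket_def msub_def
  by (intro ext) (simp only: sum_subtractf[symmetric], rule sum.cong[OF refl], simp add: algebra_simps)
lemma bracket_add_r: "bracket r C (madd A B) = madd (bracket r C A) (bracket r C B)"
  unfolding bracket_def madd_def
  by (intro ext) (simp only: sum.distrib[symmetric], rule sum.cong[OF refl], simp add: algebra_simps)
lemma bracket_sub_r: "bracket r C (msub A B) = msub (bracket r C A) (bracket r C B)"
  unfolding bracket_def msub_def
  by (intro ext) (simp only: sum_subtractf[symmetric], rule sum.cong[OF refl], simp add: algebra_simps)

lemma finite_idx[simp]: "finite (idx r)"
  by (rule finite_subset[of _ "{- int r..int r}"]) (auto simp: idx_def)

lemma bracket_Emat: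
  assumes "b \<in> idx r" "d \<in> idx r"
  shows "bracket r (Emat a b) (Emat c d) =
    (\<lambda>i j. (if i = a \<and> b = c \<and> j = d then 1 else 0) - (if i = c \<and> d = a \<and> j = b then 1 else 0))"
proof (rule ext, rule ext)
  fix i j
  have "bracket r (Emat a b) (Emat c d) i j =
     (\<Sum>k\<in>idx r. (if k = b then (if i = a \<and> b = c \<and> j = d then 1 else 0) else 0)
               - (if k = d then (if i = c \<and> d = a \<and> j = b then 1 else 0) else 0))"
    unfolding bracket_def by (rule sum.cong[OF refl]) (cases "i = a"; cases "j = d"; cases "i = c"; cases "j = b"; auto simp: Emat_def)
  also have "\<dots> = (if i = a \<and> b = c \<and> j = d then 1 else 0) - (if i = c \<and> d = a \<and> j = b then 1 else 0)"
    by (simp only: sum_subtractf sum.delta[OF finite_idx] assms if_True)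
  finally show "bracket r (Emat a b) (Emat c d) i j = \<dots>" .
qed

lemma idx_mem: "(i \<in> idx r) = (1 \<le> \<bar>i\<bar> \<and> \<bar>i\<bar> \<le> int r)"
  unfolding idx_def by simp

lemmas br_simps = bracket_add_l bracket_sub_l bracket_add_r bracket_sub_r bracket_Emat

lemma test1:
  assumes "r \<ge> 3"
  shows "bracket r (xm 1 1) (xr r 2) = smul (-1) (xr r 1)"
proof -
  have "bracket r (xm 1 1) (xr r 2) = bracket r (msub (Emat 2 1) (Emat (-1) (-2))) (madd (Emat (- int r) 2) (Emat (-2) (int r)))"
    using assms by (simp add: xm_def xr_def xmbar_def)
  also have "\<dots> = smul (-1) (xr r 1)"
    using assms by (simp add: br_simps idx_mem xr_def xmbar_def) (auto simp: fun_eq_iff smul_def madd_def msub_def Emat_def)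
  finally show ?thesis .
qed

definition Sm :: "int \<Rightarrow> int \<Rightarrow> mat" where
  "Sm p q = (\<lambda>i j. Emat p q i j - of_int (sgn p * sgn q) * Emat (-q) (-p) i j)"

definition key :: "nat \<Rightarrow> int \<Rightarrow> int" where
  "key r p = (if p > 0 then p else 2 * int r + 1 + p)"

definition Nset :: "nat \<Rightarrow> mat set" where
  "Nset r = nminus_half r \<union> {xr r i | i. 1 \<le> i \<and> i \<le> r}"

definition hmat :: "nat \<Rightarrow> mat" where
  "hmat j = msub (Emat (int j) (int j)) (Emat (- int j) (- int j))"

lemma alg3: "(w::complex) * w = 1 \<Longrightarrow> 1 - w * B = - w * (B - w * 1)"
proof -
  assume "w * w = 1"
  moreover have "- w * (B - w * 1) = w * w - w * B" by (simp add: algebra_simps)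
  ultimately show ?thesis by simp
qed

lemma Sm_sp:
  assumes "p \<in> idx r" "q \<in> idx r"
  shows "Sm p q \<in> sp r"
  unfolding sp_def mem_Collect_eq
proof (intro conjI allI impI ballI)
  fix i j assume "i \<notin> idx r \<or> j \<notin> idx r"
  then have A: "\<not> (i = p \<and> j = q)" and B: "\<not> (i = -q \<and> j = -p)" using assms by auto
  have "Sm p q i j = (if i = p \<and> j = q then 1 else 0) - of_int (sgn p * sgn q) * (if i = -q \<and> j = -p then 1 else 0)"
    unfolding Sm_def Emat_def by simp
  also have "\<dots> = 0" by (simp only: if_not_P[OF A] if_not_P[OF B]) simp
  finally show "Sm p q i j = 0" .
next
  fix i j assume ij: "i \<in> idx r" "j \<in> idx r"
  have nz: "i \<noteq> 0" "j \<noteq> 0" "p \<noteq> 0" "q \<noteq> 0" using assms ij idx_nz by auto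
  have ww: "sgn p * sgn q * (sgn p * sgn q) = (1::int)"
    using nz by (auto simp: sgn_if)
  have ww': "(of_int (sgn p * sgn q) :: complex) * of_int (sgn p * sgn q) = 1"
    by (metis ww of_int_1 of_int_mult)
  have e1: "Sm p q i j = (if i = p \<and> j = q then 1 else 0) - of_int (sgn p * sgn q) * (if i = -q \<and> j = -p then 1 else 0)"
    unfolding Sm_def Emat_def by simp
  have e2: "Sm p q (-j) (-i) = (if i = -q \<and> j = -p then 1 else 0) - of_int (sgn p * sgn q) * (if i = p \<and> j = q then 1 else 0)"
    unfolding Sm_def Emat_def by auto
  show "Sm p q i j = - of_int (sgn i * sgn j) * Sm p q (- j) (- i)"
  proof (cases "i = p \<and> j = q")
    case True
    then have s: "sgn i * sgn j = sgn p * sgn q" by simp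
    show ?thesis unfolding e1 e2 s by (simp only: if_P[OF True] alg3[OF ww'])
  next
    case False
    show ?thesis
    proof (cases "i = -q \<and> j = -p")
      case True
      then have s: "sgn i * sgn j = sgn p * sgn q" by (simp add: sgn_minus)
      show ?thesis unfolding e1 e2 s by (simp only: if_P[OF True] if_not_P[OF False]) simp
    next
      case False2: False
      show ?thesis unfolding e1 e2 by (simp only: if_not_P[OF False2] if_not_P[OF False]) simp
    qed
  qed
qed

lemma Sm_pos_pos: "p > 0 \<Longrightarrow> q > 0 \<Longrightarrow> Sm p q = msub (Emat p q) (Emat (-q) (-p))"
  by (auto simp: fun_eq_iff Sm_def msub_def)
lemma Sm_neg_neg: "p < 0 \<Longrightarrow> q < 0 \<Longrightarrow> Sm p q = smul (-1) (msub (Emat (-q) (-p)) (Emat p q))"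
  by (auto simp: fun_eq_iff Sm_def msub_def smul_def)
lemma Sm_pos_neg: "p > 0 \<Longrightarrow> q < 0 \<Longrightarrow> Sm p q = madd (Emat p q) (Emat (-q) (-p))"
  by (auto simp: fun_eq_iff Sm_def madd_def)
lemma Sm_neg_pos: "p < 0 \<Longrightarrow> q > 0 \<Longrightarrow> Sm p q = madd (Emat p q) (Emat (-q) (-p))"
  by (auto simp: fun_eq_iff Sm_def madd_def)

lemma madd_comm: "madd A B = madd B A"
  by (auto simp: madd_def fun_eq_iff)

lemma madd_self: "madd A A = smul 2 A"
  by (auto simp: madd_def smul_def fun_eq_iff)

lemma smul_1: "smul 1 A = A"
  by (auto simp: smul_def fun_eq_iff)

lemma classify_lower:
  assumes p: "p \<in> idx r" and q: "q \<in> idx r" and k: "key r q < key r p"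
  shows "\<exists>c y. y \<in> Nset r \<and> Sm p q = smul c y"
proof -
  have pr: "\<bar>p\<bar> \<le> int r" "p \<noteq> 0" and qr: "\<bar>q\<bar> \<le> int r" "q \<noteq> 0" using p q by (auto simp: idx_def)
  have xmbar_in: "xmbar a b \<in> Nset r" if "1 \<le> a" "a \<le> b" "b \<le> int r" for a b
  proof (cases "b = int r")
    case True
    then have "xmbar a b = xr r (nat a)" using that by (simp add: xr_def)
    moreover have "1 \<le> nat a" "nat a \<le> r" using that True by auto
    ultimately show ?thesis unfolding Nset_def by blast
  next
    case False
    then have "b < int r" using that by simp
    then show ?thesis using that unfolding Nset_def nminus_half_def by blast
  qed
  show ?thesis
  proof (cases "p > 0")
    case True
    have b1: "- int r \<le> q" "p \<le> int r" using pr qr by auto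
    have "q > 0"
    proof (rule ccontr)
      assume "\<not> q > 0"
      then have "key r q = 2 * int r + 1 + q" "key r p = p" using True by (auto simp: key_def)
      then show False using k b1 by linarith
    qed
    then have "q < p" using k True by (simp add: key_def)
    have "xm q (p - 1) = msub (Emat p q) (Emat (-q) (-p))" unfolding xm_def by simp
    then have "Sm p q = xm q (p - 1)" using Sm_pos_pos[OF True \<open>q > 0\<close>] by simp
    moreover have "xm q (p - 1) \<in> Nset r"
    proof -
      have "1 \<le> q" "q \<le> p - 1" "p - 1 < int r" using \<open>q > 0\<close> \<open>q < p\<close> pr by auto
      then show ?thesis unfolding Nset_def nminus_half_def by blast
    qed
    ultimately show ?thesis by (metis smul_1)
  next
    case False
    then have pn: "p < 0" using pr by simp
    show ?thesis
    proof (cases "q > 0")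
      case True
      have e: "Sm p q = madd (Emat p q) (Emat (-q) (-p))" using pn True by (simp add: Sm_neg_pos)
      consider "-p = q" | "q < -p" | "-p < q" by linarith
      then show ?thesis
      proof cases
        case 1
        then have "p = -q" by simp
        then have "Sm p q = smul 2 (xmbar q q)" unfolding e xmbar_def by (simp add: madd_self)
        moreover have "xmbar q q \<in> Nset r" using True qr by (intro xmbar_in) auto
        ultimately show ?thesis by blast
      next
        case 2
        then have "Sm p q = xmbar q (-p)" unfolding e xmbar_def by simp
        moreover have "xmbar q (-p) \<in> Nset r" using True pr 2 pn by (intro xmbar_in) auto
        ultimately show ?thesis by (metis smul_1)
      next
        case 3
        then have "Sm p q = xmbar (-p) q" unfolding e xmbar_def by (subst madd_comm) simp
        moreover have "xmbar (-p) q \<in> Nset r" using True qr 3 pn by (intro xmbar_in) auto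
        ultimately show ?thesis by (metis smul_1)
      qed
    next
      case False
      then have qn: "q < 0" using qr by simp
      then have "-p < -q" using k pn by (auto simp: key_def)
      have "Sm p q = smul (-1) (xm (-p) (-q - 1))" using pn qn by (simp add: Sm_neg_neg xm_def)
      moreover have "xm (-p) (-q - 1) \<in> Nset r"
      proof -
        have "1 \<le> -p" "-p \<le> -q - 1" "-q - 1 < int r" using pn qn \<open>-p < -q\<close> qr by auto
        then show ?thesis unfolding Nset_def nminus_half_def by blast
      qed
      ultimately show ?thesis by blast
    qed
  qed
qed

lemma classify_upper:
  assumes p: "p \<in> idx r" and q: "q \<in> idx r" and k: "key r p < key r q"
  shows "\<exists>c e. e \<in> nplus r \<and> Sm p q = smul c e"
proof -
  have pr: "\<bar>p\<bar> \<le> int r" "p \<noteq> 0" and qr: "\<bar>q\<bar> \<le> int r" "q \<noteq> 0" using p q by (auto simp: idx_def)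
  show ?thesis
  proof (cases "q > 0")
    case True
    have b1: "- int r \<le> p" "q \<le> int r" using pr qr by auto
    have "p > 0"
    proof (rule ccontr)
      assume "\<not> p > 0"
      then have "key r p = 2 * int r + 1 + p" "key r q = q" using True by (auto simp: key_def)
      then show False using k b1 by linarith
    qed
    then have "p < q" using k True by (simp add: key_def)
    have "Sm p q = msub (Emat p q) (Emat (-q) (-p))" using True \<open>p > 0\<close> by (simp add: Sm_pos_pos)
    moreover have "msub (Emat p q) (Emat (-q) (-p)) \<in> nplus r"
    proof -
      have "1 \<le> p" "p < q" "q \<le> int r" using \<open>p > 0\<close> \<open>p < q\<close> qr by auto
      then show ?thesis unfolding nplus_def by blast
    qed
    ultimately show ?thesis by (metis smul_1)
  next
    case False
    then have qn: "q < 0" using qr by simp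
    show ?thesis
    proof (cases "p > 0")
      case True
      have e: "Sm p q = madd (Emat p q) (Emat (-q) (-p))" using qn True by (simp add: Sm_pos_neg)
      consider "-q = p" | "p < -q" | "-q < p" by linarith
      then show ?thesis
      proof cases
        case 1
        then have "q = -p" by simp
        then have "Sm p q = smul 2 (Emat p (-p))" unfolding e by (simp add: madd_self)
        moreover have "Emat p (-p) \<in> nplus r"
        proof -
          have "1 \<le> p" "p \<le> int r" using True pr by auto
          then show ?thesis unfolding nplus_def by blast
        qed
        ultimately show ?thesis by blast
      next
        case 2
        then have "Sm p q = madd (Emat p (-(-q))) (Emat (-q) (-p))" unfolding e by simp
        moreover have "madd (Emat p (-(-q))) (Emat (-q) (-p)) \<in> nplus r"
        proof -
          have "1 \<le> p" "p < -q" "-q \<le> int r" using True 2 qr qn by auto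
          then show ?thesis unfolding nplus_def by blast
        qed
        ultimately show ?thesis by (metis smul_1)
      next
        case 3
        then have "Sm p q = madd (Emat (-q) (-p)) (Emat p (-(-q)))" unfolding e by (subst madd_comm) simp
        moreover have "madd (Emat (-q) (-p)) (Emat p (-(-q))) \<in> nplus r"
        proof -
          have "1 \<le> -q" "-q < p" "p \<le> int r" using True 3 pr qn by auto
          then show ?thesis unfolding nplus_def by blast
        qed
        ultimately show ?thesis by (metis smul_1)
      qed
    next
      case False
      then have pn: "p < 0" using pr by simp
      then have "-q < -p" using k qn by (auto simp: key_def)
      have "Sm p q = smul (-1) (msub (Emat (-q) (-p)) (Emat p q))" using pn qn by (simp add: Sm_neg_neg)
      moreover have "msub (Emat (-q) (-p)) (Emat (-(-p)) (-(-q))) \<in> nplus r"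
      proof -
        have "1 \<le> -q" "-q < -p" "-p \<le> int r" using pn qn \<open>-q < -p\<close> pr by auto
        then show ?thesis unfolding nplus_def by blast
      qed
      ultimately show ?thesis by (metis minus_minus)
    qed
  qed
qed

lemma classify_diag:
  assumes p: "p \<in> idx r"
  shows "\<exists>j\<in>{1..r}. Sm p p = hmat j \<or> Sm p p = smul (-1) (hmat j)"
proof -
  have pr: "\<bar>p\<bar> \<le> int r" "p \<noteq> 0" using p by (auto simp: idx_def)
  show ?thesis
  proof (cases "p > 0")
    case True
    then have "Sm p p = hmat (nat p)" by (simp add: Sm_pos_pos hmat_def)
    then show ?thesis using True pr by (intro bexI[of _ "nat p"]) auto
  next
    case False
    then have "p < 0" using pr by simp
    then have "Sm p p = smul (-1) (hmat (nat (-p)))" by (simp add: Sm_neg_neg hmat_def)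
    then show ?thesis using \<open>p < 0\<close> pr by (intro bexI[of _ "nat (-p)"]) auto
  qed
qed

lemma key_trich: "p \<in> idx r \<Longrightarrow> q \<in> idx r \<Longrightarrow> p = q \<or> key r p < key r q \<or> key r q < key r p"
  unfolding key_def idx_def by auto

lemma Emat_pair: "Emat p q i j = (if (p, q) = (i, j) then 1 else 0)"
  unfolding Emat_def by auto

lemma alg4: "(c::complex) * ((if A then 1 else 0) - w * (if B then 1 else 0)) = (if A then c else 0) - (if B then c * w else 0)"
  by (cases A; cases B) (auto simp: right_diff_distrib)

lemma sp_decomp:
  assumes z: "z \<in> sp r"
  shows "z = (\<lambda>i j. \<Sum>x\<in>idx r \<times> idx r. (z (fst x) (snd x) / 2) * Sm (fst x) (snd x) i j)"
proof (intro ext)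
  fix i j
  let ?w = "\<lambda>x. (of_int (sgn (fst x) * sgn (snd x)) :: complex)"
  have "(\<Sum>x\<in>idx r \<times> idx r. (z (fst x) (snd x) / 2) * Sm (fst x) (snd x) i j)
     = (\<Sum>x\<in>idx r \<times> idx r. (if x = (i, j) then z (fst x) (snd x) / 2 else 0))
       - (\<Sum>x\<in>idx r \<times> idx r. (if x = (-j, -i) then z (fst x) (snd x) / 2 * ?w x else 0))"
    unfolding sum_subtractf[symmetric]
  proof (rule sum.cong[OF refl])
    fix x :: "int \<times> int"
    obtain p q where x: "x = (p, q)" by fastforce
    have "(p, q) = (i, j) \<longleftrightarrow> x = (i, j)" using x by simp
    moreover have "(-q, -p) = (i, j) \<longleftrightarrow> x = (-j, -i)" unfolding x prod.inject by presburger
    ultimately show "z (fst x) (snd x) / 2 * Sm (fst x) (snd x) i j =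
         (if x = (i, j) then z (fst x) (snd x) / 2 else 0) - (if x = (- j, - i) then z (fst x) (snd x) / 2 * ?w x else 0)"
      unfolding Sm_def Emat_pair x fst_conv snd_conv
      by (simp only: \<open>(p, q) = (i, j) \<longleftrightarrow> x = (i, j)\<close> \<open>(-q, -p) = (i, j) \<longleftrightarrow> x = (-j, -i)\<close> alg4)
  qed
  also have "\<dots> = (if (i, j) \<in> idx r \<times> idx r then z i j / 2 else 0)
      - (if (-j, -i) \<in> idx r \<times> idx r then z (-j) (-i) / 2 * of_int (sgn (-j) * sgn (-i)) else 0)"
    by (simp only: sum.delta[OF finite_cartesian_product[OF finite_idx finite_idx]] fst_conv snd_conv)
  also have "\<dots> = z i j"
  proof (cases "i \<in> idx r \<and> j \<in> idx r")
    case True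
    have s: "(of_int (sgn (-j) * sgn (-i)) :: complex) = of_int (sgn i * sgn j)" by (simp add: sgn_minus)
    have zz: "z (-j) (-i) = - of_int (sgn i * sgn j) * z i j"
      using spD[OF z, of "-j" "-i"] True by (simp add: sgn_minus mult.commute)
    have ww: "(of_int (sgn i * sgn j) :: complex) * of_int (sgn i * sgn j) = 1"
    proof -
      have "(of_int (sgn i * sgn j) :: complex) * of_int (sgn i * sgn j)
          = (of_int (sgn i) * of_int (sgn i)) * (of_int (sgn j) * of_int (sgn j))"
        by (simp only: of_int_mult mult_ac)
      moreover have "(of_int (sgn i) :: complex) * of_int (sgn i) = 1" using True idx_nz sgn_sq by blast
      moreover have "(of_int (sgn j) :: complex) * of_int (sgn j) = 1" using True idx_nz sgn_sq by blast
      ultimately show ?thesis by (simp only: mult_1_right)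
    qed
    have "z i j / 2 - z (-j) (-i) / 2 * of_int (sgn i * sgn j) = z i j / 2 + z i j / 2 * (of_int (sgn i * sgn j) * of_int (sgn i * sgn j))"
      unfolding zz by (simp add: algebra_simps)
    also have "\<dots> = z i j" using ww by simp
    finally show ?thesis using True by (simp only: s mem_Sigma_iff idx_neg if_True simp_thms)
  next
    case False
    then have "z i j = 0" using spD0[OF z] by blast
    moreover have n1: "(i, j) \<notin> idx r \<times> idx r" "(-j, -i) \<notin> idx r \<times> idx r" using False by auto
    ultimately show ?thesis by (simp only: if_not_P[OF n1(1)] if_not_P[OF n1(2)]) simp
  qed
  finally show "z i j = (\<Sum>x\<in>idx r \<times> idx r. (z (fst x) (snd x) / 2) * Sm (fst x) (snd x) i j)" ..
qed

lemma nplus_sp: "e \<in> nplus r \<Longrightarrow> e \<in> sp r"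
proof -
  assume "e \<in> nplus r"
  then consider (a) i j where "e = msub (Emat i j) (Emat (-j) (-i))" "1 \<le> i" "i < j" "j \<le> int r"
    | (b) i j where "e = madd (Emat i (-j)) (Emat j (-i))" "1 \<le> i" "i < j" "j \<le> int r"
    | (c) i where "e = Emat i (-i)" "1 \<le> i" "i \<le> int r"
    unfolding nplus_def by blast
  then show "e \<in> sp r"
  proof cases
    case a
    then have "e = Sm i j" by (simp add: Sm_pos_pos)
    then show ?thesis using a Sm_sp[of i r j] by (simp add: idx_def)
  next
    case b
    then have "e = Sm i (-j)" by (simp add: Sm_pos_neg)
    then show ?thesis using b Sm_sp[of i r "-j"] by (simp add: idx_def)
  next
    case c
    then have "e = smul (1/2) (Sm i (-i))" by (simp add: Sm_pos_neg madd_self smul_def fun_eq_iff)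
    then show ?thesis using c Sm_sp[of i r "-i"] sp_smul by (simp add: idx_def)
  qed
qed

lemma xm_sp: "1 \<le> i \<Longrightarrow> i \<le> j \<Longrightarrow> j < int r \<Longrightarrow> xm i j \<in> sp r"
proof -
  assume a: "1 \<le> i" "i \<le> j" "j < int r"
  have "xm i j = Sm (j + 1) i" using a by (simp add: Sm_pos_pos xm_def)
  then show ?thesis using a Sm_sp[of "j+1" r i] by (simp add: idx_def)
qed

lemma xmbar_sp: "1 \<le> i \<Longrightarrow> i \<le> j \<Longrightarrow> j \<le> int r \<Longrightarrow> xmbar i j \<in> sp r"
proof -
  assume a: "1 \<le> i" "i \<le> j" "j \<le> int r"
  show ?thesis
  proof (cases "i = j")
    case True
    have "Sm (-i) i = madd (Emat (-i) i) (Emat (-i) i)" using a by (simp add: Sm_neg_pos)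
    then have "xmbar i j = smul (1/2) (Sm (-i) i)" using True by (simp add: xmbar_def madd_self smul_def fun_eq_iff)
    then show ?thesis using a Sm_sp[of "-i" r i] sp_smul by (simp add: idx_def)
  next
    case False
    then have "xmbar i j = Sm (-j) i" using a by (simp add: xmbar_def Sm_neg_pos madd_comm)
    then show ?thesis using a Sm_sp[of "-j" r i] by (simp add: idx_def)
  qed
qed

lemma Nset_sp: "y \<in> Nset r \<Longrightarrow> y \<in> sp r"
  unfolding Nset_def nminus_half_def xr_def
  by (auto intro!: xm_sp xmbar_sp)

lemma hmat_sp: "1 \<le> j \<Longrightarrow> j \<le> r \<Longrightarrow> hmat j \<in> sp r"
  using Sm_sp[of "int j" r "int j"] by (simp add: Sm_pos_pos hmat_def idx_def)

lemma rho_decomp: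
  assumes rep: "is_rep r \<rho>" and z: "z \<in> sp r"
  shows "\<rho> z *v w = (\<Sum>x\<in>idx r \<times> idx r. (z (fst x) (snd x) / 2) *s (\<rho> (Sm (fst x) (snd x)) *v w))"
proof -
  have e: "\<rho> z = \<rho> (\<lambda>i j. \<Sum>x\<in>idx r \<times> idx r. (z (fst x) (snd x) / 2) * Sm (fst x) (snd x) i j)"
    by (rule arg_cong[OF sp_decomp[OF z]])
  show ?thesis unfolding e
    by (rule rho_sum[OF rep]) (auto intro: Sm_sp)
qed

lemma term_lower:
  assumes rep: "is_rep r \<rho>" and p: "p \<in> idx r" and q: "q \<in> idx r" and k: "key r q < key r p"
  shows "\<rho> (Sm p q) *v w \<in> vec.span {\<rho> y *v w | y. y \<in> Nset r}"
proof -
  obtain c y where y: "y \<in> Nset r" and e: "Sm p q = smul c y" using classify_lower[OF p q k] by blast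
  have "\<rho> (Sm p q) *v w = c *s (\<rho> y *v w)" unfolding e by (rule rho_smul[OF rep Nset_sp[OF y]])
  moreover have "\<rho> y *v w \<in> vec.span {\<rho> y *v w | y. y \<in> Nset r}" using y by (intro vec.span_base) blast
  ultimately show ?thesis by (simp add: vec.span_scale)
qed

lemma lower_span:
  assumes rep: "is_rep r \<rho>" and z: "z \<in> sp r"
    and low: "\<And>p q. p \<in> idx r \<Longrightarrow> q \<in> idx r \<Longrightarrow> key r p \<le> key r q \<Longrightarrow> z p q = 0"
  shows "\<rho> z *v w \<in> vec.span {\<rho> y *v w | y. y \<in> Nset r}"
  unfolding rho_decomp[OF rep z]
proof (rule vec.span_sum)
  fix x assume x: "x \<in> idx r \<times> idx r"
  show "(z (fst x) (snd x) / 2) *s (\<rho> (Sm (fst x) (snd x)) *v w) \<in> vec.span {\<rho> y *v w | y. y \<in> Nset r}"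
  proof (cases "key r (snd x) < key r (fst x)")
    case True
    then show ?thesis using term_lower[OF rep _ _ True, of w] x by (auto intro: vec.span_scale)
  next
    case False
    then have "z (fst x) (snd x) = 0" using low x by auto
    then show ?thesis by (simp add: vec.span_zero)
  qed
qed

lemma hw_span:
  assumes rep: "is_rep r \<rho>" and hw: "is_hwv r m \<rho> v" and z: "z \<in> sp r"
  shows "\<rho> z *v v \<in> vec.span (insert v {\<rho> y *v v | y. y \<in> Nset r})"
  unfolding rho_decomp[OF rep z]
proof (rule vec.span_sum)
  fix x assume x: "x \<in> idx r \<times> idx r"
  obtain p q where pq: "x = (p, q)" by fastforce
  have p: "p \<in> idx r" and q: "q \<in> idx r" using x pq by auto
  have sub: "vec.span {\<rho> y *v v | y. y \<in> Nset r} \<subseteq> vec.span (insert v {\<rho> y *v v | y. y \<in> Nset r})"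
    by (intro vec.span_mono) auto
  have "\<rho> (Sm p q) *v v \<in> vec.span (insert v {\<rho> y *v v | y. y \<in> Nset r})"
  proof -
    consider "p = q" | "key r p < key r q" | "key r q < key r p" using key_trich[OF p q] by blast
    then show ?thesis
    proof cases
      case 1
      obtain j where j: "j \<in> {1..r}" and hj: "Sm p p = hmat j \<or> Sm p p = smul (-1) (hmat j)"
        using classify_diag[OF p] by blast
      have hv: "\<rho> (hmat j) *v v = of_nat (\<Sum>i\<in>{j..r}. m i) *s v"
        using hw j unfolding is_hwv_def hmat_def by blast
      have vin: "v \<in> vec.span (insert v {\<rho> y *v v | y. y \<in> Nset r})" by (intro vec.span_base) auto
      from hj show ?thesis
      proof
        assume "Sm p p = hmat j"
        then show ?thesis using 1 hv vin by (simp add: vec.span_scale)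
      next
        assume "Sm p p = smul (-1) (hmat j)"
        then have "\<rho> (Sm p q) *v v = (-1) *s (\<rho> (hmat j) *v v)" using 1 rho_smul[OF rep hmat_sp] j by auto
        then show ?thesis using hv vin by (simp add: vec.span_scale vec.span_neg)
      qed
    next
      case 2
      obtain c e where e: "e \<in> nplus r" and se: "Sm p q = smul c e" using classify_upper[OF p q 2] by blast
      have "\<rho> (Sm p q) *v v = c *s (\<rho> e *v v)" unfolding se by (rule rho_smul[OF rep nplus_sp[OF e]])
      also have "\<rho> e *v v = 0" using hw e unfolding is_hwv_def by blast
      finally show ?thesis by (simp add: vec.span_zero)
    next
      case 3
      then show ?thesis using term_lower[OF rep p q 3] sub by blast
    qed
  qed
  then show "(z (fst x) (snd x) / 2) *s (\<rho> (Sm (fst x) (snd x)) *v v) \<in> vec.span (insert v {\<rho> y *v v | y. y \<in> Nset r})"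
    using pq by (simp add: vec.span_scale)
qed

definition negpos :: "mat \<Rightarrow> bool" where
  "negpos A \<longleftrightarrow> (\<forall>i j. A i j \<noteq> 0 \<longrightarrow> i < 0 \<and> j > 0)"

lemma bracket_negpos: "negpos A \<Longrightarrow> negpos B \<Longrightarrow> bracket r A B = (\<lambda>i j. 0)"
  unfolding negpos_def bracket_def
  by (intro ext sum.neutral ballI) (metis less_asym mult_eq_0_iff diff_self)

lemma Emat_nz: "Emat a b i j \<noteq> 0 \<Longrightarrow> i = a \<and> j = b"
  unfolding Emat_def by (simp split: if_splits)

lemma negpos_Emat: "a < 0 \<Longrightarrow> b > 0 \<Longrightarrow> negpos (Emat a b)"
  unfolding negpos_def using Emat_nz by blast

lemma negpos_madd: "negpos A \<Longrightarrow> negpos B \<Longrightarrow> negpos (madd A B)"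
  unfolding negpos_def madd_def by (metis add.left_neutral)

lemma negpos_xmbar: "1 \<le> i \<Longrightarrow> 1 \<le> j \<Longrightarrow> negpos (xmbar i j)"
proof -
  assume a: "1 \<le> i" "1 \<le> j"
  show ?thesis
  proof (cases "i = j")
    case True
    then show ?thesis unfolding xmbar_def using a by (simp only: if_P) (rule negpos_Emat; linarith)
  next
    case False
    then show ?thesis unfolding xmbar_def using a by (simp only: if_not_P if_False) (intro negpos_madd negpos_Emat; linarith)
  qed
qed

definition f1 :: mat where "f1 = xm 1 1"
definition g1 :: mat where "g1 = xmbar 1 1"
definition e1 :: mat where "e1 = msub (Emat 1 2) (Emat (-2) (-1))"

lemma br_f1_x2:
  assumes "r \<ge> 2"
  shows "bracket r f1 (xr r 2) = smul (-1) (xr r 1)"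
proof (cases "r = 2")
  case True
  have "bracket r f1 (xr r 2) = bracket r (msub (Emat 2 1) (Emat (-1) (-2))) (Emat (-2) 2)"
    using True by (simp add: f1_def xm_def xr_def xmbar_def)
  also have "\<dots> = smul (-1) (xr r 1)"
    using True by (simp add: br_simps idx_mem xr_def xmbar_def) (auto simp: fun_eq_iff smul_def madd_def msub_def Emat_def)
  finally show ?thesis .
next
  case False
  then have r3: "r \<ge> 3" using assms by simp
  have "bracket r f1 (xr r 2) = bracket r (msub (Emat 2 1) (Emat (-1) (-2))) (madd (Emat (- int r) 2) (Emat (-2) (int r)))"
    using r3 by (simp add: f1_def xm_def xr_def xmbar_def)
  also have "\<dots> = smul (-1) (xr r 1)"
    using r3 by (simp add: br_simps idx_mem xr_def xmbar_def) (auto simp: fun_eq_iff smul_def madd_def msub_def Emat_def)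
  finally show ?thesis .
qed

lemma br_f1_x1:
  assumes "r \<ge> 2"
  shows "bracket r f1 (xr r 1) = smul (- (if r = 2 then 2 else 0)) g1"
proof (cases "r = 2")
  case True
  have "bracket r f1 (xr r 1) = bracket r (msub (Emat 2 1) (Emat (-1) (-2))) (madd (Emat (-2) 1) (Emat (-1) 2))"
    using True by (simp add: f1_def xm_def xr_def xmbar_def)
  also have "\<dots> = smul (- (if r = 2 then 2 else 0)) g1"
    using True by (simp add: br_simps idx_mem g1_def xmbar_def) (auto simp: fun_eq_iff smul_def madd_def msub_def Emat_def)
  finally show ?thesis .
next
  case False
  then have r3: "r \<ge> 3" using assms by simp
  have "bracket r f1 (xr r 1) = bracket r (msub (Emat 2 1) (Emat (-1) (-2))) (madd (Emat (- int r) 1) (Emat (-1) (int r)))"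
    using r3 by (simp add: f1_def xm_def xr_def xmbar_def)
  also have "\<dots> = smul (- (if r = 2 then 2 else 0)) g1"
    using r3 by (simp add: br_simps idx_mem g1_def xmbar_def) (auto simp: fun_eq_iff smul_def madd_def msub_def Emat_def)
  finally show ?thesis .
qed

lemma br_f1_xj:
  assumes "3 \<le> j" "j \<le> r"
  shows "bracket r f1 (xr r j) = (\<lambda>i j. 0)"
proof (cases "j = r")
  case True
  have "bracket r f1 (xr r j) = bracket r (msub (Emat 2 1) (Emat (-1) (-2))) (Emat (- int r) (int r))"
    using True by (simp add: f1_def xm_def xr_def xmbar_def)
  also have "\<dots> = (\<lambda>i j. 0)"
    using assms by (simp add: br_simps idx_mem) (auto simp: fun_eq_iff madd_def msub_def Emat_def)
  finally show ?thesis .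
next
  case False
  have "bracket r f1 (xr r j) = bracket r (msub (Emat 2 1) (Emat (-1) (-2))) (madd (Emat (- int r) (int j)) (Emat (- int j) (int r)))"
    using False by (simp add: f1_def xm_def xr_def xmbar_def)
  also have "\<dots> = (\<lambda>i j. 0)"
    using assms by (simp add: br_simps idx_mem) (auto simp: fun_eq_iff madd_def msub_def Emat_def)
  finally show ?thesis .
qed

lemma br_g1_f1:
  assumes "r \<ge> 2"
  shows "bracket r g1 f1 = (\<lambda>i j. 0)"
proof -
  have "bracket r g1 f1 = bracket r (Emat (-1) 1) (msub (Emat 2 1) (Emat (-1) (-2)))"
    by (simp add: f1_def xm_def g1_def xmbar_def)
  also have "\<dots> = (\<lambda>i j. 0)"
    using assms by (simp add: br_simps idx_mem) (auto simp: fun_eq_iff madd_def msub_def Emat_def)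
  finally show ?thesis .
qed

lemma br_e1_f1:
  assumes "r \<ge> 2"
  shows "bracket r e1 f1 = (\<lambda>i j. 1 * hmat 1 i j + (-1) * hmat 2 i j)"
proof -
  have "bracket r e1 f1 = bracket r (msub (Emat 1 2) (Emat (-2) (-1))) (msub (Emat 2 1) (Emat (-1) (-2)))"
    by (simp add: f1_def xm_def e1_def)
  also have "\<dots> = (\<lambda>i j. 1 * hmat 1 i j + (-1) * hmat 2 i j)"
    using assms by (simp add: br_simps idx_mem) (auto simp: fun_eq_iff madd_def msub_def Emat_def hmat_def)
  finally show ?thesis .
qed

lemma br_h1_f1:
  assumes "r \<ge> 2"
  shows "bracket r (\<lambda>i j. 1 * hmat 1 i j + (-1) * hmat 2 i j) f1 = smul (-2) f1"
proof -
  have "(\<lambda>i j. 1 * hmat 1 i j + (-1) * hmat 2 i j) = msub (madd (Emat 1 1) (Emat (-2) (-2))) (madd (Emat (-1) (-1)) (Emat 2 2))"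
    by (auto simp: fun_eq_iff hmat_def madd_def msub_def Emat_def)
  then have "bracket r (\<lambda>i j. 1 * hmat 1 i j + (-1) * hmat 2 i j) f1 =
     bracket r (msub (madd (Emat 1 1) (Emat (-2) (-2))) (madd (Emat (-1) (-1)) (Emat 2 2))) (msub (Emat 2 1) (Emat (-1) (-2)))"
    by (simp add: f1_def xm_def)
  also have "\<dots> = smul (-2) f1"
    using assms by (simp add: br_simps idx_mem f1_def xm_def) (auto simp: fun_eq_iff madd_def msub_def Emat_def smul_def)
  finally show ?thesis .
qed

lemma br_r1_ef:
  assumes "r \<ge> 1"
  shows "bracket r (Emat 1 (-1)) (Emat (-1) 1) = hmat 1"
  using assms by (simp add: br_simps idx_mem) (auto simp: fun_eq_iff hmat_def msub_def Emat_def)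

lemma br_r1_hf:
  assumes "r \<ge> 1"
  shows "bracket r (hmat 1) (Emat (-1) 1) = smul (-2) (Emat (-1) 1)"
  using assms by (simp add: br_simps idx_mem hmat_def) (auto simp: fun_eq_iff msub_def Emat_def smul_def)

definition pw :: "complex^'n^'n \<Rightarrow> nat \<Rightarrow> complex^'n \<Rightarrow> complex^'n" where
  "pw M k w = ((*v) M ^^ k) w"

lemma pw_0[simp]: "pw M 0 w = w" by (simp add: pw_def)
lemma pw_Suc: "pw M (Suc k) w = M *v pw M k w" by (simp add: pw_def)
lemma pw_Suc': "pw M (Suc k) w = pw M k (M *v w)" by (simp add: pw_def funpow_Suc_right del: funpow.simps)
lemma pw_add_exp: "pw M (a + b) w = pw M a (pw M b w)" by (simp add: pw_def funpow_add)

lemma pw_lin_add: "pw M k (x + y) = pw M k x + pw M k y"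
  by (induction k) (simp_all add: pw_Suc mv_add)
lemma pw_lin_diff: "pw M k (x - y) = pw M k x - pw M k y"
  by (induction k) (simp_all add: pw_Suc mv_diff)
lemma pw_lin_scale: "pw M k (c *s x) = c *s pw M k x"
  by (induction k) (simp_all add: pw_Suc mv_scale)
lemma pw_zero: "pw M k 0 = 0"
  by (induction k) (simp_all add: pw_Suc mv_zero)
lemma pw_neg: "pw M k (- x) = - pw M k x"
  using pw_lin_diff[of M k 0 x] by (simp add: pw_zero)

lemma comm_pw1:
  assumes "\<And>w. A *v (B *v w) = B *v (A *v w)"
  shows "A *v pw B k w = pw B k (A *v w)"
  by (induction k) (simp_all add: pw_Suc assms)

lemma comm_pw:
  assumes "\<And>w. A *v (B *v w) = B *v (A *v w)"
  shows "pw A a (pw B b w) = pw B b (pw A a w)"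
proof (induction a)
  case 0 then show ?case by simp
next
  case (Suc a)
  have "pw A (Suc a) (pw B b w) = A *v pw B b (pw A a w)" by (simp add: pw_Suc Suc)
  also have "\<dots> = pw B b (A *v pw A a w)" by (rule comm_pw1[OF assms])
  finally show ?case by (simp add: pw_Suc)
qed

lemma comm_pw_fun:
  assumes "\<And>w. A *v (z w) = z (A *v w)"
  shows "pw A k (z w) = z (pw A k w)"
  by (induction k) (simp_all add: pw_Suc assms)

lemma comm_pow:
  assumes FY: "\<And>w. F *v (Y *v w) - Y *v (F *v w) = - z w"
    and Yz: "\<And>w. Y *v (z w) = z (Y *v w)"
  shows "F *v pw Y c w = pw Y c (F *v w) - of_nat c *s z (pw Y (c - 1) w)"
proof (induction c)
  case 0 then show ?case by simp
next
  case (Suc c)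
  have "F *v pw Y (Suc c) w = Y *v (F *v pw Y c w) - z (pw Y c w)"
    using FY[of "pw Y c w"] by (simp add: pw_Suc algebra_simps)
  also have "\<dots> = pw Y (Suc c) (F *v w) - of_nat c *s (Y *v z (pw Y (c - 1) w)) - z (pw Y c w)"
    unfolding Suc by (simp add: mv_diff mv_scale pw_Suc)
  also have "of_nat c *s (Y *v z (pw Y (c - 1) w)) = of_nat c *s z (pw Y c w)"
  proof (cases c)
    case 0 then show ?thesis by simp
  next
    case (Suc c') then show ?thesis by (simp add: Yz pw_Suc)
  qed
  finally show ?case by (simp add: algebra_simps vec.scale_left_distrib)
qed

lemma crux_abstract:
  fixes F X1 X2 G :: "complex^'n^'n" and c0 :: complex
  assumes FX2: "\<And>w. F *v (X2 *v w) - X2 *v (F *v w) = - (X1 *v w)"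
    and FX1: "\<And>w. F *v (X1 *v w) - X1 *v (F *v w) = - (c0 *s (G *v w))"
    and X12: "\<And>w. X1 *v (X2 *v w) = X2 *v (X1 *v w)"
    and GX1: "\<And>w. G *v (X1 *v w) = X1 *v (G *v w)"
    and Fnil: "pw F (Suc mb) v' = 0"
    and base: "\<And>a c. a \<le> mb \<Longrightarrow> pw X1 a (pw X2 c v') \<in> W"
    and Wsub: "vec.subspace W"
    and WF: "\<And>w. w \<in> W \<Longrightarrow> F *v w \<in> W"
    and WG: "\<And>w. w \<in> W \<Longrightarrow> G *v w \<in> W"
  shows "pw X1 a (pw X2 c v') \<in> W"
proof -
  define T where "T a c b = pw X1 a (pw X2 c (pw F b v'))" for a c b
  have P1: "F *v pw X2 c w = pw X2 c (F *v w) - of_nat c *s (X1 *v pw X2 (c - 1) w)" for c w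
    by (rule comm_pow[OF FX2]) (simp add: X12)
  have P2: "F *v pw X1 a w = pw X1 a (F *v w) - of_nat a *s (c0 *s (G *v pw X1 (a - 1) w))" for a w
    by (rule comm_pow[where z = "\<lambda>w. c0 *s (G *v w)", OF FX1]) (simp add: mv_scale GX1)
  have P1': "pw X2 c (F *v w) = F *v pw X2 c w + of_nat c *s (X1 *v pw X2 (c - 1) w)" for c w
    using P1[of c w] by (simp add: algebra_simps)
  have P2': "pw X1 a (F *v w) = F *v pw X1 a w + of_nat a *s (c0 *s (G *v pw X1 (a - 1) w))" for a w
    using P2[of a w] by (simp add: algebra_simps)
  have rec2: "T a c (Suc b) = F *v T a c b + (of_nat a * c0) *s (G *v T (a - 1) c b) + of_nat c *s T (Suc a) (c - 1) b" for a c b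
  proof -
    let ?u = "pw F b v'"
    have "T a c (Suc b) = pw X1 a (pw X2 c (F *v ?u))" unfolding T_def by (simp add: pw_Suc)
    also have "\<dots> = pw X1 a (F *v pw X2 c ?u) + of_nat c *s pw X1 a (X1 *v pw X2 (c - 1) ?u)"
      unfolding P1' pw_lin_add pw_lin_scale ..
    also have "pw X1 a (X1 *v pw X2 (c - 1) ?u) = T (Suc a) (c - 1) b"
      unfolding T_def pw_Suc' ..
    also have "pw X1 a (F *v pw X2 c ?u) = F *v T a c b + (of_nat a * c0) *s (G *v T (a - 1) c b)"
      unfolding P2' T_def by (simp add: vec.scale_scale)
    finally show ?thesis .
  qed
  have rec1: "(1 + of_nat c) *s T (Suc a) c b = T a (Suc c) (Suc b) - F *v T a (Suc c) b
      - (of_nat a * c0) *s (G *v T (a - 1) (Suc c) b)" for a c b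
  proof -
    let ?u = "pw F b v'"
    have x1: "X1 *v y = X2 *v (F *v y) - F *v (X2 *v y)" for y
      using FX2[of y] by (simp add: algebra_simps)
    have "T (Suc a) c b = pw X1 a (X1 *v pw X2 c ?u)" unfolding T_def pw_Suc' ..
    also have "\<dots> = pw X1 a (X2 *v (F *v pw X2 c ?u)) - pw X1 a (F *v pw X2 (Suc c) ?u)"
      unfolding x1 pw_lin_diff pw_Suc ..
    also have "X2 *v (F *v pw X2 c ?u) = pw X2 (Suc c) (F *v ?u) - of_nat c *s (X1 *v pw X2 c ?u)"
    proof -
      have "X2 *v (F *v pw X2 c ?u) = pw X2 (Suc c) (F *v ?u) - of_nat c *s (X2 *v (X1 *v pw X2 (c - 1) ?u))"
        unfolding P1 mv_diff mv_scale pw_Suc ..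
      also have "of_nat c *s (X2 *v (X1 *v pw X2 (c - 1) ?u)) = of_nat c *s (X1 *v pw X2 c ?u)"
      proof (cases c)
        case 0 then show ?thesis by simp
      next
        case (Suc c') then show ?thesis by (simp add: X12 pw_Suc)
      qed
      finally show ?thesis .
    qed
    also have "pw X1 a (pw X2 (Suc c) (F *v ?u) - of_nat c *s (X1 *v pw X2 c ?u))
       = T a (Suc c) (Suc b) - of_nat c *s T (Suc a) c b"
      unfolding pw_lin_diff pw_lin_scale T_def by (simp only: pw_Suc[of F b v'] pw_Suc'[of X1 a])
    also have "pw X1 a (F *v pw X2 (Suc c) ?u) = F *v T a (Suc c) b + (of_nat a * c0) *s (G *v T (a - 1) (Suc c) b)"
      unfolding P2' T_def by (simp add: vec.scale_scale)
    finally have "T (Suc a) c b = T a (Suc c) (Suc b) - of_nat c *s T (Suc a) c b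
       - (F *v T a (Suc c) b + (of_nat a * c0) *s (G *v T (a - 1) (Suc c) b))" .
    then show ?thesis by (simp add: algebra_simps vec.scale_left_distrib)
  qed
  have W0: "0 \<in> W" using Wsub vec.subspace_0 by blast
  have Wadd: "x \<in> W \<Longrightarrow> y \<in> W \<Longrightarrow> x + y \<in> W" for x y using Wsub vec.subspace_add by blast
  have Wdiff: "x \<in> W \<Longrightarrow> y \<in> W \<Longrightarrow> x - y \<in> W" for x y using Wsub vec.subspace_diff by blast
  have Wscale: "x \<in> W \<Longrightarrow> k *s x \<in> W" for x k using Wsub vec.subspace_scale by blast
  have lemA: "a + b \<le> mb \<Longrightarrow> T a c b \<in> W" for a b c
  proof (induction b arbitrary: a c)
    case 0 then show ?case using base unfolding T_def by simp
  next
    case (Suc b)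
    have "F *v T a c b \<in> W" using Suc by (intro WF) auto
    moreover have "G *v T (a - 1) c b \<in> W" using Suc by (intro WG) auto
    moreover have "T (Suc a) (c - 1) b \<in> W" using Suc by auto
    ultimately show ?case unfolding rec2 by (intro Wadd Wscale)
  qed
  have lemB: "T a c b \<in> W" for a b c
  proof (induction a arbitrary: b c rule: less_induct)
    case (less a)
    show ?case
    proof (cases "b > mb")
      case True
      have "pw F b v' = pw F (b - Suc mb) (pw F (Suc mb) v')"
        using True pw_add_exp[of F "b - Suc mb" "Suc mb" v'] by simp
      then have "pw F b v' = 0" using Fnil by (simp add: pw_zero)
      then show ?thesis unfolding T_def using W0 by (simp add: pw_zero)
    next
      case False
      show ?thesis
      proof (cases "a + b \<le> mb")
        case True then show ?thesis by (rule lemA)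
      next
        case False2: False
        then obtain a' where a: "a = Suc a'" using False by (cases a) auto
        have "(1 + of_nat c) *s T (Suc a') c b \<in> W"
          unfolding rec1 using less a by (intro Wdiff WF WG Wscale) auto
        then have "(1 / (1 + of_nat c)) *s ((1 + of_nat c) *s T (Suc a') c b) \<in> W" by (rule Wscale)
        moreover have "(1 + of_nat c :: complex) \<noteq> 0"
          by (metis add_cancel_left_right of_nat_Suc of_nat_eq_0_iff one_add_one nat.distinct(1) add.commute)
        ultimately have "((1 / (1 + of_nat c)) * (1 + of_nat c)) *s T (Suc a') c b \<in> W"
          by (simp only: vec.scale_scale)
        moreover have "(1 / (1 + of_nat c)) * (1 + of_nat c :: complex) = 1" using \<open>(1 + of_nat c :: complex) \<noteq> 0\<close> by simp
        ultimately show ?thesis using a by simp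
      qed
    qed
  qed
  show ?thesis using lemB[of a c 0] unfolding T_def by simp
qed

lemma act_list_Cons: "act_list \<rho> (y # ys) w = \<rho> y *v act_list \<rho> ys w"
  by (simp add: act_list_def)
lemma act_list_Nil: "act_list \<rho> [] w = w"
  by (simp add: act_list_def)

lemma gen_all:
  assumes rep: "is_rep r \<rho>" and irr: "irreducible_rep r \<rho>" and hw: "is_hwv r m \<rho> v"
  shows "vec.span {act_list \<rho> ys v | ys. set ys \<subseteq> Nset r} = UNIV"
proof -
  let ?G = "{act_list \<rho> ys v | ys. set ys \<subseteq> Nset r}"
  let ?M = "vec.span ?G"
  have c1: "\<rho> y *v w \<in> ?M" if y: "y \<in> Nset r" and w: "w \<in> ?M" for y w
  proof (rule span_map[OF _ w])
    fix s assume "s \<in> ?G"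
    then obtain ys where s: "s = act_list \<rho> ys v" "set ys \<subseteq> Nset r" by blast
    then have "\<rho> y *v s = act_list \<rho> (y # ys) v" by (simp add: act_list_Cons)
    moreover have "set (y # ys) \<subseteq> Nset r" using s y by auto
    ultimately show "\<rho> y *v s \<in> ?M" by (intro vec.span_base) blast
  qed
  have c2: "\<forall>z\<in>sp r. \<rho> z *v act_list \<rho> ys v \<in> ?M" if "set ys \<subseteq> Nset r" for ys
    using that
  proof (induction ys)
    case Nil
    show ?case
    proof
      fix z assume z: "z \<in> sp r"
      have "insert v {\<rho> y *v v | y. y \<in> Nset r} \<subseteq> ?G"
      proof
        fix x assume "x \<in> insert v {\<rho> y *v v | y. y \<in> Nset r}"
        then consider "x = v" | y where "x = \<rho> y *v v" "y \<in> Nset r" by blast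
        then show "x \<in> ?G"
        proof cases
          case 1
          then have "x = act_list \<rho> [] v" by (simp only: act_list_Nil)
          moreover have "set [] \<subseteq> Nset r" by simp
          ultimately show ?thesis by blast
        next
          case 2
          then have "x = act_list \<rho> [y] v" by (simp only: act_list_Nil act_list_Cons)
          moreover have "set [y] \<subseteq> Nset r" using 2 by simp
          ultimately show ?thesis by blast
        qed
      qed
      then have "vec.span (insert v {\<rho> y *v v | y. y \<in> Nset r}) \<subseteq> ?M" by (rule vec.span_mono)
      then show "\<rho> z *v act_list \<rho> [] v \<in> ?M" using hw_span[OF rep hw z] by (auto simp: act_list_Nil)
    qed
  next
    case (Cons y ys)
    have y: "y \<in> Nset r" and ys: "set ys \<subseteq> Nset r" using Cons.prems by auto
    have ysp: "y \<in> sp r" by (rule Nset_sp[OF y])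
    show ?case
    proof
      fix z assume z: "z \<in> sp r"
      let ?u = "act_list \<rho> ys v"
      have "\<rho> z *v act_list \<rho> (y # ys) v = \<rho> (bracket r z y) *v ?u + \<rho> y *v (\<rho> z *v ?u)"
        using rho_br[OF rep z ysp, of ?u] by (simp add: act_list_Cons algebra_simps)
      moreover have "\<rho> (bracket r z y) *v ?u \<in> ?M" using Cons.IH[OF ys] bracket_sp[OF z ysp] by blast
      moreover have "\<rho> y *v (\<rho> z *v ?u) \<in> ?M"
        by (rule c1[OF y]) (use Cons.IH[OF ys] z in blast)
      ultimately show "\<rho> z *v act_list \<rho> (y # ys) v \<in> ?M" by (simp add: vec.span_add)
    qed
  qed
  have inv: "invariant_subspace r \<rho> ?M"
    unfolding invariant_subspace_def
  proof (intro conjI ballI)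
    show "vec.subspace ?M" by (rule vec.subspace_span)
    fix A w assume A: "A \<in> sp r" and w: "w \<in> ?M"
    show "\<rho> A *v w \<in> ?M"
    proof (rule span_map[OF _ w])
      fix s assume "s \<in> ?G"
      then obtain ys where "s = act_list \<rho> ys v" "set ys \<subseteq> Nset r" by blast
      then show "\<rho> A *v s \<in> ?M" using c2 A by blast
    qed
  qed
  have "v = act_list \<rho> [] v" "set [] \<subseteq> Nset r" by (simp_all only: act_list_Nil) simp
  then have "v \<in> ?G" by blast
  then have "v \<in> ?M" by (rule vec.span_base)
  moreover have "v \<noteq> 0" using hw unfolding is_hwv_def by blast
  ultimately show ?thesis using irr inv unfolding irreducible_rep_def by blast
qed

lemma xmono_foldr: "xmono r \<rho> k v = foldr (\<lambda>i w. pw (\<rho> (xr r i)) (k i) w) [1..<r+1] v"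
  by (simp add: xmono_def pw_def)

lemma xr_sp: "1 \<le> i \<Longrightarrow> i \<le> r \<Longrightarrow> xr r i \<in> sp r"
  unfolding xr_def by (rule xmbar_sp) auto

lemma rho_comm_of_zero:
  assumes rep: "is_rep r \<rho>" and A: "A \<in> sp r" and B: "B \<in> sp r" and z: "bracket r A B = (\<lambda>i j. 0)"
  shows "\<rho> A *v (\<rho> B *v w) = \<rho> B *v (\<rho> A *v w)"
  using rho_br[OF rep A B, of w] rho_zero[OF rep, of w] z by simp

lemma X_comm:
  assumes rep: "is_rep r \<rho>" and "1 \<le> i" "i \<le> r" "1 \<le> j" "j \<le> r"
  shows "\<rho> (xr r i) *v (\<rho> (xr r j) *v w) = \<rho> (xr r j) *v (\<rho> (xr r i) *v w)"
  using assms by (intro rho_comm_of_zero[OF rep] xr_sp bracket_negpos) (auto simp: xr_def intro!: negpos_xmbar)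

lemma foldr_shift:
  assumes "distinct L" "i \<in> set L"
    and comm: "\<And>j w. j \<in> set L \<Longrightarrow> A i *v (A j *v w) = A j *v (A i *v w)"
  shows "A i *v foldr (\<lambda>j w. pw (A j) (k j) w) L v = foldr (\<lambda>j w. pw (A j) ((k(i := Suc (k i))) j) w) L v"
  using assms
proof (induction L)
  case Nil then show ?case by simp
next
  case (Cons j L)
  show ?case
  proof (cases "j = i")
    case True
    then have "i \<notin> set L" using Cons.prems by auto
    then have e: "foldr (\<lambda>j w. pw (A j) ((k(i := Suc (k i))) j) w) L v = foldr (\<lambda>j w. pw (A j) (k j) w) L v"
      by (intro foldr_cong) auto
    have "foldr (\<lambda>j w. pw (A j) ((k(i := Suc (k i))) j) w) (j # L) v
        = pw (A i) (Suc (k i)) (foldr (\<lambda>j w. pw (A j) ((k(i := Suc (k i))) j) w) L v)"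
      by (simp only: True foldr_Cons o_apply fun_upd_same)
    also have "\<dots> = pw (A i) (Suc (k i)) (foldr (\<lambda>j w. pw (A j) (k j) w) L v)" by (simp only: e)
    also have "\<dots> = A i *v foldr (\<lambda>j w. pw (A j) (k j) w) (j # L) v"
      by (simp only: True foldr_Cons o_apply pw_Suc)
    finally show ?thesis by simp
  next
    case False
    then have i: "i \<in> set L" using Cons.prems by auto
    have "A i *v foldr (\<lambda>j w. pw (A j) (k j) w) (j # L) v = pw (A j) (k j) (A i *v foldr (\<lambda>j w. pw (A j) (k j) w) L v)"
      using comm_pw1[of "A i" "A j"] Cons.prems(3) by simp
    also have "\<dots> = pw (A j) (k j) (foldr (\<lambda>j w. pw (A j) ((k(i := Suc (k i))) j) w) L v)"
      using Cons.IH[OF _ i] Cons.prems by simp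
    finally show ?thesis using False by simp
  qed
qed

lemma foldr_comm_pw:
  assumes "\<And>j w. j \<in> set L \<Longrightarrow> F *v (A j *v w) = A j *v (F *v w)"
  shows "pw F n (foldr (\<lambda>j w. pw (A j) (k j) w) L v) = foldr (\<lambda>j w. pw (A j) (k j) w) L (pw F n v)"
  using assms
proof (induction L)
  case Nil then show ?case by simp
next
  case (Cons j L)
  have "pw F n (pw (A j) (k j) (foldr (\<lambda>j w. pw (A j) (k j) w) L v)) = pw (A j) (k j) (pw F n (foldr (\<lambda>j w. pw (A j) (k j) w) L v))"
    by (rule comm_pw) (use Cons.prems in auto)
  then show ?case using Cons by simp
qed

lemma foldr_pw_zero: "foldr (\<lambda>j w. pw (A j) (k j) w) L 0 = 0"
  by (induction L) (simp_all add: pw_zero)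

lemma foldr_pw_id: "foldr (\<lambda>j w. pw (A j) 0 w) L v = v"
  by (induction L) simp_all

lemma xmono_shift:
  assumes rep: "is_rep r \<rho>" and i: "1 \<le> i" "i \<le> r"
  shows "\<rho> (xr r i) *v xmono r \<rho> k v = xmono r \<rho> (k(i := Suc (k i))) v"
  unfolding xmono_foldr
  by (rule foldr_shift[where A = "\<lambda>j. \<rho> (xr r j)"]) (use i in \<open>auto intro: X_comm[OF rep]\<close>)

definition lowr :: "nat \<Rightarrow> mat \<Rightarrow> bool" where
  "lowr r A \<longleftrightarrow> (\<forall>p q. p \<in> idx r \<longrightarrow> q \<in> idx r \<longrightarrow> key r p \<le> key r q \<longrightarrow> A p q = 0)"

lemma bracket_lowr:
  assumes A: "A \<in> sp r" "lowr r A" and B: "B \<in> sp r" "lowr r B"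
  shows "lowr r (bracket r A B)"
  unfolding lowr_def
proof (intro allI impI)
  fix p q assume p: "p \<in> idx r" and q: "q \<in> idx r" and k: "key r p \<le> key r q"
  show "bracket r A B p q = 0" unfolding bracket_def
  proof (rule sum.neutral, rule ballI)
    fix x assume x: "x \<in> idx r"
    show "A p x * B x q - B p x * A x q = 0"
    proof (cases "key r p \<le> key r x")
      case True
      then have "A p x = 0" "B p x = 0" using A(2) B(2) p x unfolding lowr_def by auto
      then show ?thesis by simp
    next
      case False
      then have "key r x \<le> key r q" using k by simp
      then have "B x q = 0" "A x q = 0" using A(2) B(2) q x unfolding lowr_def by auto
      then show ?thesis by simp
    qed
  qed
qed

lemma msub_nz: "msub A B p q \<noteq> 0 \<Longrightarrow> A p q \<noteq> 0 \<or> B p q \<noteq> 0"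
  unfolding msub_def by auto
lemma madd_nz: "madd A B p q \<noteq> 0 \<Longrightarrow> A p q \<noteq> 0 \<or> B p q \<noteq> 0"
  unfolding madd_def by auto

lemma xm_lowr: "1 \<le> i \<Longrightarrow> i \<le> j \<Longrightarrow> j < int r \<Longrightarrow> lowr r (xm i j)"
  unfolding lowr_def
proof (intro allI impI, rule ccontr)
  fix p q assume a: "1 \<le> i" "i \<le> j" "j < int r" and k: "key r p \<le> key r q" and nz: "xm i j p q \<noteq> 0"
  have "Emat (j + 1) i p q \<noteq> 0 \<or> Emat (-i) (-(j+1)) p q \<noteq> 0"
    using msub_nz[OF nz[unfolded xm_def]] .
  then have "(p = j + 1 \<and> q = i) \<or> (p = -i \<and> q = -(j+1))"
    using Emat_nz by metis
  then show False
  proof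
    assume "p = j + 1 \<and> q = i"
    then have "key r p = j + 1" "key r q = i" using a by (auto simp: key_def)
    then show False using k a by linarith
  next
    assume "p = -i \<and> q = -(j+1)"
    then have "key r p = 2 * int r + 1 - i" "key r q = 2 * int r + 1 - (j + 1)" using a by (auto simp: key_def)
    then show False using k a by linarith
  qed
qed

lemma xmbar_lowr: "1 \<le> i \<Longrightarrow> i \<le> j \<Longrightarrow> j \<le> int r \<Longrightarrow> lowr r (xmbar i j)"
  unfolding lowr_def
proof (intro allI impI, rule ccontr)
  fix p q assume a: "1 \<le> i" "i \<le> j" "j \<le> int r" and k: "key r p \<le> key r q" and nz: "xmbar i j p q \<noteq> 0"
  have "(p = -j \<and> q = i) \<or> (p = -i \<and> q = j)"
  proof (cases "i = j")
    case True
    then have "Emat (-i) i p q \<noteq> 0" using nz unfolding xmbar_def by (simp only: if_P simp_thms)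
    then show ?thesis using Emat_nz True by metis
  next
    case False
    then have "madd (Emat (-j) i) (Emat (-i) j) p q \<noteq> 0" using nz unfolding xmbar_def by (simp only: if_not_P simp_thms)
    then have "Emat (-j) i p q \<noteq> 0 \<or> Emat (-i) j p q \<noteq> 0" by (rule madd_nz)
    then show ?thesis using Emat_nz by metis
  qed
  then show False
  proof
    assume "p = -j \<and> q = i"
    then have "key r p = 2 * int r + 1 - j" "key r q = i" using a by (auto simp: key_def)
    then show False using k a by linarith
  next
    assume "p = -i \<and> q = j"
    then have "key r p = 2 * int r + 1 - i" "key r q = j" using a by (auto simp: key_def)
    then show False using k a by linarith
  qed
qed

lemma Nset_lowr: "y \<in> Nset r \<Longrightarrow> lowr r y"
  unfolding Nset_def nminus_half_def xr_def
  by (auto intro!: xm_lowr xmbar_lowr)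

definition Wg :: "nat \<Rightarrow> (mat \<Rightarrow> complex^'n^'n) \<Rightarrow> (nat \<Rightarrow> nat) \<Rightarrow> complex^'n \<Rightarrow> (complex^'n) set" where
  "Wg r \<rho> m v = {act_list \<rho> ys (xmono r \<rho> k v) | ys k. set ys \<subseteq> nminus_half r \<and> k 1 \<le> m 1}"

lemma Wg_gen: "set ys \<subseteq> nminus_half r \<Longrightarrow> k 1 \<le> m 1 \<Longrightarrow> act_list \<rho> ys (xmono r \<rho> k v) \<in> vec.span (Wg r \<rho> m v)"
  unfolding Wg_def by (intro vec.span_base) blast

lemma Wg_gen0: "k 1 \<le> m 1 \<Longrightarrow> xmono r \<rho> k v \<in> vec.span (Wg r \<rho> m v)"
  using Wg_gen[of "[]" r k m \<rho> v] by (simp add: act_list_Nil)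

lemma W_half:
  assumes y: "y \<in> nminus_half r" and w: "w \<in> vec.span (Wg r \<rho> m v)"
  shows "\<rho> y *v w \<in> vec.span (Wg r \<rho> m v)"
proof (rule span_map[OF _ w])
  fix s assume "s \<in> Wg r \<rho> m v"
  then obtain ys k where s: "s = act_list \<rho> ys (xmono r \<rho> k v)" "set ys \<subseteq> nminus_half r" "k 1 \<le> m 1"
    unfolding Wg_def by blast
  have "\<rho> y *v s = act_list \<rho> (y # ys) (xmono r \<rho> k v)" using s by (simp add: act_list_Cons)
  moreover have "set (y # ys) \<subseteq> nminus_half r" using s y by simp
  ultimately show "\<rho> y *v s \<in> vec.span (Wg r \<rho> m v)" using Wg_gen s by metis
qed

lemma hw_h:
  assumes hw: "is_hwv r m \<rho> v" and j: "1 \<le> j" "j \<le> r"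
  shows "\<rho> (hmat j) *v v = of_nat (\<Sum>i\<in>{j..r}. m i) *s v"
  using hw j unfolding is_hwv_def hmat_def by auto

lemma nil_r1:
  assumes rep: "is_rep r \<rho>" and hw: "is_hwv r m \<rho> v" and r: "r = 1"
  shows "pw (\<rho> (Emat (-1) 1)) (Suc (m 1)) v = 0"
proof -
  have eN: "Emat 1 (-1) \<in> nplus r" using r unfolding nplus_def by force
  have esp: "Emat 1 (-1) \<in> sp r" by (rule nplus_sp[OF eN])
  have fe: "Emat (-1) 1 = xmbar 1 1" by (simp add: xmbar_def)
  have fsp: "Emat (-1) 1 \<in> sp r" unfolding fe using r by (intro xmbar_sp) auto
  have hsp: "hmat 1 \<in> sp r" using r by (intro hmat_sp) auto
  show ?thesis unfolding pw_def
  proof (rule sl2_nil)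
    show "\<rho> (Emat 1 (-1)) *v (\<rho> (Emat (-1) 1) *v w) - \<rho> (Emat (-1) 1) *v (\<rho> (Emat 1 (-1)) *v w) = \<rho> (hmat 1) *v w" for w
      using rho_br[OF rep esp fsp, of w] br_r1_ef[of r] r by simp
    show "\<rho> (hmat 1) *v (\<rho> (Emat (-1) 1) *v w) - \<rho> (Emat (-1) 1) *v (\<rho> (hmat 1) *v w) = (-2) *s (\<rho> (Emat (-1) 1) *v w)" for w
      using rho_br[OF rep hsp fsp, of w] br_r1_hf[of r] rho_smul[OF rep fsp, of "-2" w] r by simp
    show "\<rho> (Emat 1 (-1)) *v v = 0" using hw eN unfolding is_hwv_def by blast
    show "\<rho> (hmat 1) *v v = of_nat (m 1) *s v" using hw_h[OF hw, of 1] r by simp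
  qed
qed

lemma nil_r2:
  assumes rep: "is_rep r \<rho>" and hw: "is_hwv r m \<rho> v" and r: "r \<ge> 2"
  shows "pw (\<rho> f1) (Suc (m 1)) v = 0"
proof -
  have eN: "e1 \<in> nplus r" using r unfolding nplus_def e1_def by force
  have esp: "e1 \<in> sp r" by (rule nplus_sp[OF eN])
  have fsp: "f1 \<in> sp r" unfolding f1_def using r by (intro xm_sp) auto
  define h where "h = (\<lambda>i j. 1 * hmat 1 i j + (-1) * hmat 2 i j)"
  have h1: "hmat 1 \<in> sp r" "hmat 2 \<in> sp r" using r by (auto intro: hmat_sp)
  have hsp: "h \<in> sp r" unfolding h_def by (rule sp_lin[OF h1])
  have hv: "\<rho> h *v v = of_nat (m 1) *s v"
  proof -
    have "\<rho> h *v v = 1 *s (\<rho> (hmat 1) *v v) + (-1) *s (\<rho> (hmat 2) *v v)"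
      unfolding h_def by (rule rho_lin[OF rep h1])
    also have "\<dots> = (of_nat (\<Sum>i\<in>{1..r}. m i) - of_nat (\<Sum>i\<in>{2..r}. m i)) *s v"
      using hw_h[OF hw, of 1] hw_h[OF hw, of 2] r by (simp add: vec.scale_left_diff_distrib)
    also have "(\<Sum>i\<in>{1..r}. m i) = m 1 + (\<Sum>i\<in>{2..r}. m i)"
      using r by (simp add: sum.atLeast_Suc_atMost numeral_2_eq_2)
    finally show ?thesis by simp
  qed
  show ?thesis unfolding pw_def
  proof (rule sl2_nil)
    show "\<rho> e1 *v (\<rho> f1 *v w) - \<rho> f1 *v (\<rho> e1 *v w) = \<rho> h *v w" for w
      using rho_br[OF rep esp fsp, of w] br_e1_f1[OF r] unfolding h_def by simp
    show "\<rho> h *v (\<rho> f1 *v w) - \<rho> f1 *v (\<rho> h *v w) = (-2) *s (\<rho> f1 *v w)" for w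
      using rho_br[OF rep hsp fsp, of w] br_h1_f1[OF r] rho_smul[OF rep fsp, of "-2" w] unfolding h_def by simp
    show "\<rho> e1 *v v = 0" using hw eN unfolding is_hwv_def by blast
    show "\<rho> h *v v = of_nat (m 1) *s v" by (rule hv)
  qed
qed

lemma crux_r1:
  assumes rep: "is_rep r \<rho>" and hw: "is_hwv r m \<rho> v" and r: "r = 1"
  shows "xmono r \<rho> k v \<in> vec.span (Wg r \<rho> m v)"
proof (cases "k 1 \<le> m 1")
  case True then show ?thesis by (rule Wg_gen0)
next
  case False
  have xe: "xr r 1 = Emat (-1) 1" using r by (simp add: xr_def xmbar_def)
  have "xmono r \<rho> k v = pw (\<rho> (Emat (-1) 1)) (k 1) v"
    unfolding xmono_foldr using r xe by simp
  also have "\<dots> = pw (\<rho> (Emat (-1) 1)) (k 1 - Suc (m 1)) (pw (\<rho> (Emat (-1) 1)) (Suc (m 1)) v)"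
    using False pw_add_exp[of "\<rho> (Emat (-1) 1)" "k 1 - Suc (m 1)" "Suc (m 1)" v] by simp
  also have "\<dots> = 0" using nil_r1[OF rep hw r] by (simp add: pw_zero)
  finally show ?thesis by (simp add: vec.span_zero)
qed

lemma crux_r2:
  assumes rep: "is_rep r \<rho>" and hw: "is_hwv r m \<rho> v" and r: "r \<ge> 2"
  shows "xmono r \<rho> k v \<in> vec.span (Wg r \<rho> m v)"
proof -
  let ?X1 = "\<rho> (xr r 1)" and ?X2 = "\<rho> (xr r 2)" and ?F = "\<rho> f1" and ?G = "\<rho> g1"
  define vk where "vk k' = foldr (\<lambda>i w. pw (\<rho> (xr r i)) (k' i) w) [3..<r+1] v" for k'
  have L: "[1..<r+1] = 1 # 2 # [3..<r+1]"
  proof -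
    have a: "[1..<r+1] = 1 # [Suc 1..<r+1]" using r by (intro upt_conv_Cons) simp
    have b: "[2..<r+1] = 2 # [Suc 2..<r+1]" using r by (intro upt_conv_Cons) simp
    show ?thesis unfolding a Suc_1 b by (simp only: Suc_numeral semiring_norm)
  qed
  have split: "xmono r \<rho> k' v = pw ?X1 (k' 1) (pw ?X2 (k' 2) (vk k'))" for k'
    unfolding xmono_foldr vk_def L by simp
  have fsp: "f1 \<in> sp r" unfolding f1_def using r by (intro xm_sp) auto
  have gsp: "g1 \<in> sp r" unfolding g1_def using r by (intro xmbar_sp) auto
  have x1sp: "xr r 1 \<in> sp r" and x2sp: "xr r 2 \<in> sp r" using r by (auto intro: xr_sp)
  have fN: "f1 \<in> nminus_half r" unfolding f1_def nminus_half_def using r by force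
  have gN: "g1 \<in> nminus_half r" unfolding g1_def nminus_half_def using r by force
  let ?c0 = "if r = 2 then 2 else (0::complex)"
  let ?W = "vec.span (Wg r \<rho> m v)"
  have h1: "?F *v (?X2 *v w) - ?X2 *v (?F *v w) = - (?X1 *v w)" for w
    using rho_br[OF rep fsp x2sp, of w] br_f1_x2[OF r] rho_smul[OF rep x1sp, of "-1" w] by simp
  have h2: "?F *v (?X1 *v w) - ?X1 *v (?F *v w) = - (?c0 *s (?G *v w))" for w
    using rho_br[OF rep fsp x1sp, of w] br_f1_x1[OF r] rho_smul[OF rep gsp, of "- ?c0" w]
    by (simp add: vec.scale_minus_left)
  have h3: "?X1 *v (?X2 *v w) = ?X2 *v (?X1 *v w)" for w
    using r by (intro X_comm[OF rep]) auto
  have h4: "?G *v (?X1 *v w) = ?X1 *v (?G *v w)" for w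
    using r by (intro rho_comm_of_zero[OF rep gsp x1sp] bracket_negpos) (auto simp: g1_def xr_def intro!: negpos_xmbar)
  have comm3: "?F *v (\<rho> (xr r j) *v w) = \<rho> (xr r j) *v (?F *v w)" if "j \<in> set [3..<r+1]" for j w
    using that by (intro rho_comm_of_zero[OF rep fsp xr_sp br_f1_xj]) auto
  have h5: "pw ?F (Suc (m 1)) (vk k) = 0"
  proof -
    have "pw ?F (Suc (m 1)) (vk k) = foldr (\<lambda>i w. pw (\<rho> (xr r i)) (k i) w) [3..<r+1] (pw ?F (Suc (m 1)) v)"
      unfolding vk_def by (rule foldr_comm_pw[where A = "\<lambda>j. \<rho> (xr r j)", OF comm3])
    also have "\<dots> = foldr (\<lambda>i w. pw (\<rho> (xr r i)) (k i) w) [3..<r+1] 0"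
      by (simp only: nil_r2[OF rep hw r])
    also have "\<dots> = 0" by (rule foldr_pw_zero)
    finally show ?thesis .
  qed
  have h6: "pw ?X1 a (pw ?X2 c (vk k)) \<in> ?W" if a: "a \<le> m 1" for a c
  proof -
    define k' where "k' = k(1 := a, 2 := c)"
    have "vk k' = vk k" unfolding vk_def k'_def by (intro foldr_cong) auto
    then have "pw ?X1 a (pw ?X2 c (vk k)) = xmono r \<rho> k' v" unfolding split k'_def by simp
    moreover have "k' 1 \<le> m 1" using a by (simp add: k'_def)
    ultimately show ?thesis using Wg_gen0 by metis
  qed
  have h7: "vec.subspace ?W" by (rule vec.subspace_span)
  have h8: "w \<in> ?W \<Longrightarrow> ?F *v w \<in> ?W" for w by (rule W_half[OF fN])
  have h9: "w \<in> ?W \<Longrightarrow> ?G *v w \<in> ?W" for w by (rule W_half[OF gN])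
  show ?thesis unfolding split by (rule crux_abstract[OF h1 h2 h3 h4 h5 h6 h7 h8 h9])
qed

lemma crux:
  assumes rep: "is_rep r \<rho>" and hw: "is_hwv r m \<rho> v" and r: "r \<ge> 1"
  shows "xmono r \<rho> k v \<in> vec.span (Wg r \<rho> m v)"
proof (cases "r = 1")
  case True then show ?thesis using crux_r1[OF rep hw] by blast
next
  case False then show ?thesis using crux_r2[OF rep hw] r by auto
qed

lemma act_list_W:
  assumes "set ys \<subseteq> nminus_half r" and "w \<in> vec.span (Wg r \<rho> m v)"
  shows "act_list \<rho> ys w \<in> vec.span (Wg r \<rho> m v)"
  using assms by (induction ys) (auto simp: act_list_Nil act_list_Cons intro: W_half)

lemma X_closed_gen:
  assumes rep: "is_rep r \<rho>" and hw: "is_hwv r m \<rho> v" and r: "r \<ge> 1"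
    and ys: "set ys \<subseteq> nminus_half r"
  shows "\<forall>i. 1 \<le> i \<and> i \<le> r \<longrightarrow> \<rho> (xr r i) *v act_list \<rho> ys (xmono r \<rho> k v) \<in> vec.span (Wg r \<rho> m v)"
  using ys
proof (induction ys)
  case Nil
  show ?case
  proof (intro allI impI)
    fix i assume i: "1 \<le> i \<and> i \<le> r"
    have "\<rho> (xr r i) *v act_list \<rho> [] (xmono r \<rho> k v) = xmono r \<rho> (k(i := Suc (k i))) v"
      using xmono_shift[OF rep, of i] i by (simp add: act_list_Nil)
    then show "\<rho> (xr r i) *v act_list \<rho> [] (xmono r \<rho> k v) \<in> vec.span (Wg r \<rho> m v)"
      using crux[OF rep hw r] by simp
  qed
next
  case (Cons y ys)
  have y: "y \<in> nminus_half r" and ys: "set ys \<subseteq> nminus_half r" using Cons.prems by auto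
  have yN: "y \<in> Nset r" using y unfolding Nset_def by blast
  have ysp: "y \<in> sp r" by (rule Nset_sp[OF yN])
  let ?u = "act_list \<rho> ys (xmono r \<rho> k v)"
  let ?W = "vec.span (Wg r \<rho> m v)"
  have IH: "\<rho> (xr r j) *v ?u \<in> ?W" if "1 \<le> j" "j \<le> r" for j
    using Cons.IH[OF ys] that by blast
  show ?case
  proof (intro allI impI)
    fix i assume i: "1 \<le> i \<and> i \<le> r"
    have xsp: "xr r i \<in> sp r" using i by (intro xr_sp) auto
    have xN: "xr r i \<in> Nset r" using i unfolding Nset_def by blast
    have e: "\<rho> (xr r i) *v act_list \<rho> (y # ys) (xmono r \<rho> k v) = \<rho> (bracket r (xr r i) y) *v ?u + \<rho> y *v (\<rho> (xr r i) *v ?u)"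
      using rho_br[OF rep xsp ysp, of ?u] by (simp add: act_list_Cons algebra_simps)
    have t2: "\<rho> y *v (\<rho> (xr r i) *v ?u) \<in> ?W"
      by (rule W_half[OF y]) (use IH i in auto)
    have bsp: "bracket r (xr r i) y \<in> sp r" by (rule bracket_sp[OF xsp ysp])
    have blow: "lowr r (bracket r (xr r i) y)"
      by (rule bracket_lowr[OF xsp Nset_lowr[OF xN] ysp Nset_lowr[OF yN]])
    have t1a: "\<rho> (bracket r (xr r i) y) *v ?u \<in> vec.span {\<rho> y' *v ?u | y'. y' \<in> Nset r}"
      by (rule lower_span[OF rep bsp]) (use blow in \<open>auto simp: lowr_def\<close>)
    have sub: "{\<rho> y' *v ?u | y'. y' \<in> Nset r} \<subseteq> ?W"
    proof
      fix x assume "x \<in> {\<rho> y' *v ?u | y'. y' \<in> Nset r}"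
      then obtain y' where x: "x = \<rho> y' *v ?u" and y': "y' \<in> Nset r" by blast
      from y' consider "y' \<in> nminus_half r" | j where "y' = xr r j" "1 \<le> j" "j \<le> r" unfolding Nset_def by blast
      then show "x \<in> ?W"
      proof cases
        case 1
        have "?u \<in> ?W" by (rule act_list_W[OF ys crux[OF rep hw r]])
        then show ?thesis unfolding x by (rule W_half[OF 1])
      next
        case 2
        then show ?thesis using IH x by simp
      qed
    qed
    have t1: "\<rho> (bracket r (xr r i) y) *v ?u \<in> ?W"
      using t1a vec.span_minimal[OF sub vec.subspace_span] by blast
    show "\<rho> (xr r i) *v act_list \<rho> (y # ys) (xmono r \<rho> k v) \<in> ?W"
      unfolding e using t1 t2 by (rule vec.span_add)
  qed
qed

lemma W_closed_N:
  assumes rep: "is_rep r \<rho>" and hw: "is_hwv r m \<rho> v" and r: "r \<ge> 1"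
    and y: "y \<in> Nset r" and w: "w \<in> vec.span (Wg r \<rho> m v)"
  shows "\<rho> y *v w \<in> vec.span (Wg r \<rho> m v)"
proof -
  from y consider "y \<in> nminus_half r" | j where "y = xr r j" "1 \<le> j" "j \<le> r" unfolding Nset_def by blast
  then show ?thesis
  proof cases
    case 1 then show ?thesis by (rule W_half[OF _ w])
  next
    case 2
    show ?thesis
    proof (rule span_map[OF _ w])
      fix s assume "s \<in> Wg r \<rho> m v"
      then obtain ys k where s: "s = act_list \<rho> ys (xmono r \<rho> k v)" "set ys \<subseteq> nminus_half r"
        unfolding Wg_def by blast
      show "\<rho> y *v s \<in> vec.span (Wg r \<rho> m v)"
        using X_closed_gen[OF rep hw r s(2), of k] 2 s(1) by blast
    qed
  qed
qed

theorem lemma4p5: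
  fixes r :: nat and m :: "nat \<Rightarrow> nat"
    and \<rho> :: "mat \<Rightarrow> complex^'n^'n" and v :: "complex^'n"
  assumes "r \<ge> 1"
    and "is_rep r \<rho>"
    and "irreducible_rep r \<rho>"
    and "is_hwv r m \<rho> v"
  shows "vec.span {act_list \<rho> ys (xmono r \<rho> k v) | ys k.
                    set ys \<subseteq> nminus_half r \<and> k 1 \<le> m 1} = UNIV"
proof -
  note r = assms(1) and rep = assms(2) and irr = assms(3) and hw = assms(4)
  let ?W = "vec.span (Wg r \<rho> m v)"
  have v0: "v \<in> ?W"
  proof -
    have "xmono r \<rho> (\<lambda>_. 0) v = v" unfolding xmono_foldr by (rule foldr_pw_id)
    then show ?thesis using Wg_gen0[of "\<lambda>_. 0" m r \<rho> v] by simp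
  qed
  have gen: "act_list \<rho> ys v \<in> ?W" if "set ys \<subseteq> Nset r" for ys
    using that
  proof (induction ys)
    case Nil then show ?case using v0 by (simp add: act_list_Nil)
  next
    case (Cons y ys)
    then show ?case unfolding act_list_Cons by (intro W_closed_N[OF rep hw r]) auto
  qed
  have "UNIV = vec.span {act_list \<rho> ys v | ys. set ys \<subseteq> Nset r}"
    using gen_all[OF rep irr hw] by simp
  also have "\<dots> \<subseteq> ?W"
    by (rule vec.span_minimal) (use gen in \<open>auto intro: vec.subspace_span\<close>)
  finally show ?thesis unfolding Wg_def by blast
qed

end
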